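(* For all $n\in\mathbb{N}$ and $k\in[n+2]$, $$N_{n+1,k}=\sum_{m=0}^n\ \sum_{l=L_1(k,m)}^{L_2(k,m)}\binom{k-1}{l}\binom{n+2-k}{m+1-l}\Big[\delta_{l,0}N_{m,1}+\sum_{r=1}^{l}N_{m,r}\Big]N_{n-m,k-l},$$ where $L_1(k,m)=\max(0,m+k-n-1)$, $L_2(k,m)=\min(k-1,m+1)$ and $\delta_{l,0}$ is the Kronecker delta. In particular $N_{n,n+1}=|\mathcal{OV}^2(2n)|$.
   Context: $I_{r}$ denotes, for a totally ordered set $I$, the set of $r$-tuples $(i_1,\dots,i_r)$ with $i_1>\dots>i_m<\dots<i_r$ for some $m\in[r]$ (strict inequalities). For a non-crossing partition $\pi$ and blocks $B,B'$, write $B'<B$ if there are two consecutive elements $p<p'$ of $B'$ with $p<k<p'$ for all $k\in B$; $B'$ is the nearest outer block of $B$ if $B'<B$ and no $B''$ satisfies $B'<B''<B$. A labeling $\mathfrak i$ of the blocks by elements of a totally ordered set is V-monotone if for every sequence of blocks $B_1,\dots,B_r$ with $B_{k+1}$ the nearest outer block of $B_k$, $(\mathfrak i(B_1),\dots,\mathfrak i(B_r))\in I_r$. $\mathcal{OV}^2(2n)$ is the set of pairs $(\pi,\mathfrak i)$ with $\pi$ a non-crossing pair partition of $[2n]$ and $\mathfrak i:\pi\to[n]$ a bijective V-monotone labeling; $\mathcal{OV}^2(0)=\{\emptyset\}$. For $n\ge0$ and $k\in[n+1]$, $\mathcal{OV}^2_k(2n)$ is the set of $(\pi,\mathfrak i)\in\mathcal{OV}^2(2n)$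 such that the labeled partition of $\{0,1,\dots,2n+1\}$ obtained by adding the block $\{0,2n+1\}$ with label $k-\tfrac12$ (labels taken in $\mathbb{Q}$ with the usual order) is still V-monotonically labeled. $N_{n,k}=|\mathcal{OV}^2_k(2n)|$, with $N_{0,1}=1$. *)

theory Defs
  imports Complex_Main
begin

definition in_I :: "'a::linorder list \<Rightarrow> bool" where
  "in_I xs \<longleftrightarrow> (\<exists>m < length xs.
      (\<forall>i. i < m \<longrightarrow> xs ! i > xs ! (Suc i)) \<and>
      (\<forall>i. m \<le> i \<and> Suc i < length xs \<longrightarrow> xs ! i < xs ! (Suc i)))"

definition pair_partition :: "nat set set \<Rightarrow> nat set \<Rightarrow> bool" where
  "pair_partition \<pi> S \<longleftrightarrow>
     (\<forall>B\<in>\<pi>. card B = 2) \<and> \<Union>\<pi> = S \<and>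
     (\<forall>B\<in>\<pi>. \<forall>B'\<in>\<pi>. B \<noteq> B' \<longrightarrow> B \<inter> B' = {})"

definition noncrossing :: "nat set set \<Rightarrow> bool" where
  "noncrossing \<pi> \<longleftrightarrow> (\<forall>B\<in>\<pi>. \<forall>B'\<in>\<pi>. B \<noteq> B' \<longrightarrow>
     \<not> (\<exists>a b c d. a < b \<and> b < c \<and> c < d \<and> a \<in> B \<and> c \<in> B \<and> b \<in> B' \<and> d \<in> B'))"

definition nc_pair_partition :: "nat set set \<Rightarrow> nat set \<Rightarrow> bool" where
  "nc_pair_partition \<pi> S \<longleftrightarrow> pair_partition \<pi> S \<and> noncrossing \<pi>"

definition outer :: "nat set \<Rightarrow> nat set \<Rightarrow> bool" where
  "outer B' B \<longleftrightarrow> (\<exists>p p'. p \<in> B' \<and> p' \<in> B' \<and> p < p' \<and>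
      (\<forall>q\<in>B'. \<not> (p < q \<and> q < p')) \<and> (\<forall>k\<in>B. p < k \<and> k < p'))"

definition nearest_outer :: "nat set set \<Rightarrow> nat set \<Rightarrow> nat set \<Rightarrow> bool" where
  "nearest_outer \<pi> B' B \<longleftrightarrow> outer B' B \<and> \<not> (\<exists>B''\<in>\<pi>. outer B' B'' \<and> outer B'' B)"

definition V_monotone :: "nat set set \<Rightarrow> (nat set \<Rightarrow> 'a::linorder) \<Rightarrow> bool" where
  "V_monotone \<pi> lab \<longleftrightarrow> (\<forall>bs. bs \<noteq> [] \<and> set bs \<subseteq> \<pi> \<and>
      (\<forall>i. Suc i < length bs \<longrightarrow> nearest_outer \<pi> (bs ! Suc i) (bs ! i))
      \<longrightarrow> in_I (map lab bs))"

text \<open>OV^2(2n): labelled partitions (\<pi>, lab), lab a bijection \<pi> \<rightarrow> {1..n};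
  lab is normalised to 0 outside \<pi> so that each labelled partition is counted once.\<close>
definition OV2 :: "nat \<Rightarrow> (nat set set \<times> (nat set \<Rightarrow> nat)) set" where
  "OV2 n = {(\<pi>, lab). nc_pair_partition \<pi> {1..2*n} \<and> bij_betw lab \<pi> {1..n} \<and>
      (\<forall>B. B \<notin> \<pi> \<longrightarrow> lab B = 0) \<and> V_monotone \<pi> lab}"

definition ext_part :: "nat \<Rightarrow> nat set set \<Rightarrow> nat set set" where
  "ext_part n \<pi> = insert {0, 2*n+1} \<pi>"

definition ext_lab :: "nat \<Rightarrow> nat \<Rightarrow> (nat set \<Rightarrow> nat) \<Rightarrow> nat set \<Rightarrow> rat" where
  "ext_lab n k lab B = (if B = {0, 2*n+1} then of_nat k - 1/2 else of_nat (lab B))"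

definition OV2k :: "nat \<Rightarrow> nat \<Rightarrow> (nat set set \<times> (nat set \<Rightarrow> nat)) set" where
  "OV2k n k = {(\<pi>, lab) \<in> OV2 n. V_monotone (ext_part n \<pi>) (ext_lab n k lab)}"

definition N :: "nat \<Rightarrow> nat \<Rightarrow> nat" where
  "N n k = card (OV2k n k)"

end

theory Submission
  imports Defs
begin


lemma in_I_char:
  fixes xs :: "'a::linorder list"
  shows "in_I xs \<longleftrightarrow> xs \<noteq> [] \<and> (\<forall>i. Suc i < length xs \<longrightarrow> xs!i \<noteq> xs!Suc i) \<and>
     (\<forall>i. Suc (Suc i) < length xs \<longrightarrow> \<not>(xs!i < xs!Suc i \<and> xs!Suc (Suc i) < xs!Suc i))"
proof
  assume "in_I xs"
  then obtain m where m: "m < length xs" "\<forall>i. i < m \<longrightarrow> xs ! i > xs ! (Suc i)"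
      "\<forall>i. m \<le> i \<and> Suc i < length xs \<longrightarrow> xs ! i < xs ! (Suc i)"
    unfolding in_I_def by blast
  have "xs \<noteq> []" using m(1) by auto
  moreover have "\<forall>i. Suc i < length xs \<longrightarrow> xs!i \<noteq> xs!Suc i"
    using m by (metis linorder_not_le order_less_irrefl)
  moreover have "\<forall>i. Suc (Suc i) < length xs \<longrightarrow> \<not>(xs!i < xs!Suc i \<and> xs!Suc (Suc i) < xs!Suc i)"
  proof (intro allI impI notI)
    fix i assume a: "Suc (Suc i) < length xs" "xs!i < xs!Suc i \<and> xs!Suc (Suc i) < xs!Suc i"
    have "m \<le> i" using m(2) a by (meson leI not_less_iff_gr_or_eq)
    then have "xs!Suc i < xs!Suc (Suc i)" using m(3) a(1) by simp
    then show False using a by (meson order.asym)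
  qed
  ultimately show "xs \<noteq> [] \<and> (\<forall>i. Suc i < length xs \<longrightarrow> xs!i \<noteq> xs!Suc i) \<and>
     (\<forall>i. Suc (Suc i) < length xs \<longrightarrow> \<not>(xs!i < xs!Suc i \<and> xs!Suc (Suc i) < xs!Suc i))" by blast
next
  assume a: "xs \<noteq> [] \<and> (\<forall>i. Suc i < length xs \<longrightarrow> xs!i \<noteq> xs!Suc i) \<and>
     (\<forall>i. Suc (Suc i) < length xs \<longrightarrow> \<not>(xs!i < xs!Suc i \<and> xs!Suc (Suc i) < xs!Suc i))"
  define m where "m = (LEAST i. Suc i = length xs \<or> xs!i < xs!Suc i)"
  have ex: "Suc (length xs - 1) = length xs \<or> xs!(length xs - 1) < xs!Suc (length xs - 1)"
    using a by auto
  have m1: "Suc m = length xs \<or> xs!m < xs!Suc m" unfolding m_def by (rule LeastI_ex) (use ex in blast)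
  have mle: "m \<le> length xs - 1" unfolding m_def by (rule Least_le) (use ex in blast)
  have mlt: "m < length xs" using mle a by (cases xs) auto
  have dec: "\<forall>i. i < m \<longrightarrow> xs ! i > xs ! (Suc i)"
  proof (intro allI impI)
    fix i assume "i < m"
    then have "\<not> (Suc i = length xs \<or> xs!i < xs!Suc i)" unfolding m_def using not_less_Least by blast
    moreover have "Suc i < length xs" using \<open>i < m\<close> mlt by simp
    ultimately show "xs ! i > xs ! (Suc i)" using a by (meson linorder_neqE)
  qed
  have inc: "\<forall>i. m \<le> i \<and> Suc i < length xs \<longrightarrow> xs ! i < xs ! (Suc i)"
  proof (intro allI impI)
    fix i assume "m \<le> i \<and> Suc i < length xs"
    then show "xs ! i < xs ! (Suc i)"
    proof (induction i)
      case 0 then show ?case using m1 by auto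
    next
      case (Suc i)
      show ?case
      proof (cases "m = Suc i")
        case True then show ?thesis using m1 Suc by auto
      next
        case False
        then have "xs!i < xs!Suc i" using Suc by auto
        then have "\<not> xs!Suc (Suc i) < xs!Suc i" using a Suc by blast
        then show ?thesis using a Suc by (meson linorder_neqE)
      qed
    qed
  qed
  show "in_I xs" unfolding in_I_def using mlt dec inc by blast
qed


definition Vloc :: "nat set set \<Rightarrow> (nat set \<Rightarrow> 'a::linorder) \<Rightarrow> bool" where
 "Vloc \<pi> lab \<longleftrightarrow> (\<forall>B\<in>\<pi>. \<forall>B'\<in>\<pi>. nearest_outer \<pi> B' B \<longrightarrow> lab B \<noteq> lab B') \<and>
   (\<forall>B\<in>\<pi>. \<forall>B'\<in>\<pi>. \<forall>B''\<in>\<pi>. nearest_outer \<pi> B' B \<and> nearest_outer \<pi> B'' B' \<longrightarrow>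
      \<not>(lab B < lab B' \<and> lab B'' < lab B'))"

lemma V_monotone_iff: "V_monotone \<pi> lab \<longleftrightarrow> Vloc \<pi> lab"
proof
  assume V: "V_monotone \<pi> lab"
  have 1: "lab B \<noteq> lab B'" if "B\<in>\<pi>" "B'\<in>\<pi>" "nearest_outer \<pi> B' B" for B B'
  proof -
    have "\<forall>i. Suc i < length [B,B'] \<longrightarrow> nearest_outer \<pi> ([B,B'] ! Suc i) ([B,B'] ! i)"
    proof (intro allI impI)
      fix i assume "Suc i < length [B,B']"
      then have "i = 0" by auto
      then show "nearest_outer \<pi> ([B,B'] ! Suc i) ([B,B'] ! i)" using that by auto
    qed
    then have "[B,B'] \<noteq> [] \<and> set [B,B'] \<subseteq> \<pi> \<and> (\<forall>i. Suc i < length [B,B'] \<longrightarrow> nearest_outer \<pi> ([B,B'] ! Suc i) ([B,B'] ! i))"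
      using that by auto
    then have "in_I (map lab [B,B'])" using V unfolding V_monotone_def by blast
    then have "map lab [B,B'] ! 0 \<noteq> map lab [B,B'] ! Suc 0"
      unfolding in_I_char by (metis length_map Suc_less_eq length_Cons list.size(3) zero_less_Suc)
    then show ?thesis by simp
  qed
  have 2: "\<not>(lab B < lab B' \<and> lab B'' < lab B')" if "B\<in>\<pi>" "B'\<in>\<pi>" "B''\<in>\<pi>"
    "nearest_outer \<pi> B' B" "nearest_outer \<pi> B'' B'" for B B' B''
  proof -
    have "\<forall>i. Suc i < length [B,B',B''] \<longrightarrow> nearest_outer \<pi> ([B,B',B''] ! Suc i) ([B,B',B''] ! i)"
    proof (intro allI impI)
      fix i assume "Suc i < length [B,B',B'']"
      then have "i = 0 \<or> i = 1" by auto
      then show "nearest_outer \<pi> ([B,B',B''] ! Suc i) ([B,B',B''] ! i)" using that by auto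
    qed
    then have "[B,B',B''] \<noteq> [] \<and> set [B,B',B''] \<subseteq> \<pi> \<and> (\<forall>i. Suc i < length [B,B',B''] \<longrightarrow> nearest_outer \<pi> ([B,B',B''] ! Suc i) ([B,B',B''] ! i))"
      using that by auto
    then have "in_I (map lab [B,B',B''])" using V unfolding V_monotone_def by blast
    then have "\<not>(map lab [B,B',B''] ! 0 < map lab [B,B',B''] ! Suc 0 \<and>
       map lab [B,B',B''] ! Suc (Suc 0) < map lab [B,B',B''] ! Suc 0)"
      unfolding in_I_char by (metis length_map Suc_less_eq length_Cons list.size(3) zero_less_Suc)
    then show ?thesis by simp
  qed
  show "Vloc \<pi> lab" unfolding Vloc_def using 1 2 by blast
next
  assume Vl: "Vloc \<pi> lab"
  show "V_monotone \<pi> lab" unfolding V_monotone_def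
  proof (intro allI impI)
    fix bs :: "nat set list"
    assume a: "bs \<noteq> [] \<and> set bs \<subseteq> \<pi> \<and> (\<forall>i. Suc i < length bs \<longrightarrow> nearest_outer \<pi> (bs ! Suc i) (bs ! i))"
    have mem: "bs ! i \<in> \<pi>" if "i < length bs" for i using a that by auto
    show "in_I (map lab bs)" unfolding in_I_char
    proof (intro conjI allI impI)
      show "map lab bs \<noteq> []" using a by simp
    next
      fix i assume "Suc i < length (map lab bs)"
      then show "map lab bs ! i \<noteq> map lab bs ! Suc i"
        using Vl a mem unfolding Vloc_def by auto
    next
      fix i assume i: "Suc (Suc i) < length (map lab bs)"
      have "nearest_outer \<pi> (bs ! Suc i) (bs ! i)" "nearest_outer \<pi> (bs ! Suc (Suc i)) (bs ! Suc i)"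
        using a i by auto
      moreover have "bs ! i \<in> \<pi>" "bs ! Suc i \<in> \<pi>" "bs ! Suc (Suc i) \<in> \<pi>" using mem i by auto
      ultimately show "\<not> (map lab bs ! i < map lab bs ! Suc i \<and> map lab bs ! Suc (Suc i) < map lab bs ! Suc i)"
        using Vl i unfolding Vloc_def by auto
    qed
  qed
qed


lemma outer_pair: "u < v \<Longrightarrow> outer {u,v} B \<longleftrightarrow> (\<forall>k\<in>B. u < k \<and> k < v)"
proof
  assume "u < v" "outer {u,v} B"
  then obtain p p' where "p \<in> {u,v}" "p' \<in> {u,v}" "p < p'" "\<forall>k\<in>B. p < k \<and> k < p'"
    unfolding outer_def by blast
  moreover have "p = u" "p' = v" using calculation \<open>u<v\<close> by auto
  ultimately show "\<forall>k\<in>B. u < k \<and> k < v" by simp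
next
  assume "u < v" "\<forall>k\<in>B. u < k \<and> k < v"
  then show "outer {u,v} B" unfolding outer_def by (intro exI[of _ u] exI[of _ v]) auto
qed

lemma outer_irrefl: "\<not> outer X X"
  unfolding outer_def by blast

lemma outer_trans: "outer X Y \<Longrightarrow> outer Y Z \<Longrightarrow> outer X Z"
  unfolding outer_def by (metis order.strict_trans)

definition rootp :: "nat set set \<Rightarrow> nat set \<Rightarrow> bool" where
  "rootp \<pi> B \<longleftrightarrow> \<not>(\<exists>B'\<in>\<pi>. outer B' B)"

definition Vtop :: "nat set set \<Rightarrow> (nat set \<Rightarrow> 'a::linorder) \<Rightarrow> 'a \<Rightarrow> bool" where
  "Vtop \<pi> lab t \<longleftrightarrow> Vloc \<pi> lab \<and> (\<forall>B\<in>\<pi>. rootp \<pi> B \<longrightarrow> lab B \<noteq> t) \<and>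
     (\<forall>B\<in>\<pi>. \<forall>B'\<in>\<pi>. nearest_outer \<pi> B' B \<and> rootp \<pi> B' \<longrightarrow> \<not>(lab B < lab B' \<and> t < lab B'))"

lemma Vloc_cong: "(\<And>B. B\<in>\<pi> \<Longrightarrow> f B = g B) \<Longrightarrow> Vloc \<pi> f = Vloc \<pi> g"
  unfolding Vloc_def by simp

lemma Vtop_cong: "(\<And>B. B\<in>\<pi> \<Longrightarrow> f B = g B) \<Longrightarrow> Vtop \<pi> f t = Vtop \<pi> g t"
  unfolding Vtop_def Vloc_def by simp

lemma Vloc_insert_top:
  assumes T: "T \<notin> \<pi>" "\<And>B. B\<in>\<pi> \<Longrightarrow> outer T B" "\<And>B. B\<in>\<pi> \<Longrightarrow> \<not> outer B T"
  shows "Vloc (insert T \<pi>) lab \<longleftrightarrow> Vtop \<pi> lab (lab T)"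
proof -
  have n1: "nearest_outer (insert T \<pi>) X B \<longleftrightarrow> nearest_outer \<pi> X B" if "X\<in>\<pi>" "B\<in>\<pi>" for X B
    using T that unfolding nearest_outer_def by auto
  have n2: "nearest_outer (insert T \<pi>) T B \<longleftrightarrow> rootp \<pi> B" if "B\<in>\<pi>" for B
    using T that outer_irrefl unfolding nearest_outer_def rootp_def by auto
  have n3: "\<not> nearest_outer (insert T \<pi>) X T" if "X \<in> insert T \<pi>" for X
    using T that outer_irrefl unfolding nearest_outer_def by auto
  show ?thesis
    unfolding Vloc_def Vtop_def ball_simps
    using n1 n2 n3 by (auto 0 3)
qed


definition C :: "nat \<Rightarrow> nat \<Rightarrow> rat set \<Rightarrow> rat \<Rightarrow> (nat set set \<times> (nat set \<Rightarrow> rat)) set" where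
  "C a n L t = {(\<pi>,lab). nc_pair_partition \<pi> {a+1..a+2*n} \<and> bij_betw lab \<pi> L \<and>
      (\<forall>B. B\<notin>\<pi> \<longrightarrow> lab B = 0) \<and> Vtop \<pi> lab t}"

lemma block_sub: "nc_pair_partition \<pi> S \<Longrightarrow> B \<in> \<pi> \<Longrightarrow> B \<subseteq> S"
  unfolding nc_pair_partition_def pair_partition_def by blast

lemma V_ext:
  assumes "nc_pair_partition \<pi> {1..2*n}"
  shows "V_monotone (ext_part n \<pi>) (ext_lab n k lab) \<longleftrightarrow>
         Vtop \<pi> (\<lambda>B. of_nat (lab B) :: rat) (of_nat k - 1/2)"
proof -
  have sub: "B \<subseteq> {1..2*n}" if "B\<in>\<pi>" for B using block_sub[OF assms that] .
  have T1: "{0, 2*n+1} \<notin> \<pi>" using sub by fastforce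
  have T2: "outer {0, 2*n+1} B" if "B\<in>\<pi>" for B
    using sub[OF that] by (subst outer_pair) auto
  have T3: "\<not> outer B {0, 2*n+1}" if "B\<in>\<pi>" for B
    using sub[OF that] unfolding outer_def by fastforce
  have "V_monotone (ext_part n \<pi>) (ext_lab n k lab) \<longleftrightarrow>
        Vtop \<pi> (ext_lab n k lab) (ext_lab n k lab {0, 2*n+1})"
    unfolding V_monotone_iff ext_part_def by (rule Vloc_insert_top[OF T1 T2 T3])
  also have "\<dots> \<longleftrightarrow> Vtop \<pi> (\<lambda>B. of_nat (lab B) :: rat) (of_nat k - 1/2)"
    unfolding ext_lab_def[of n k lab "{0, 2*n+1}"] if_True simp_thms(6)
    by (rule Vtop_cong) (use T1 in \<open>auto simp: ext_lab_def\<close>)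
  finally show ?thesis .
qed

lemma Vloc_ofnat: "Vloc \<pi> (\<lambda>B. of_nat (lab B) :: rat) \<longleftrightarrow> Vloc \<pi> lab"
  unfolding Vloc_def by simp

lemma N_C: "N n k = card (C 0 n (of_nat ` {1..n}) (of_nat k - 1/2))"
proof -
  let ?\<phi> = "\<lambda>(\<pi>::nat set set, lab::nat set \<Rightarrow> nat). (\<pi>, \<lambda>B. of_nat (lab B) :: rat)"
  have inj: "inj_on ?\<phi> (OV2k n k)"
    by (auto simp: inj_on_def fun_eq_iff)
  have img: "?\<phi> ` OV2k n k = C 0 n (of_nat ` {1..n}) (of_nat k - 1/2)"
  proof
    show "?\<phi> ` OV2k n k \<subseteq> C 0 n (of_nat ` {1..n}) (of_nat k - 1/2)"
    proof clarify
      fix \<pi> lab assume a: "(\<pi>, lab) \<in> OV2k n k"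
      then have nc: "nc_pair_partition \<pi> {1..2*n}" and b: "bij_betw lab \<pi> {1..n}"
        and z: "\<forall>B. B \<notin> \<pi> \<longrightarrow> lab B = 0"
        and v: "V_monotone (ext_part n \<pi>) (ext_lab n k lab)"
        unfolding OV2k_def OV2_def by auto
      have b2: "bij_betw (\<lambda>B. of_nat (lab B) :: rat) \<pi> (of_nat ` {1..n})"
        using bij_betw_trans[OF b, of "of_nat :: nat \<Rightarrow> rat" "of_nat ` {1..n}"]
        by (simp add: o_def inj_on_def bij_betw_def)
      show "(\<pi>, \<lambda>B. of_nat (lab B)) \<in> C 0 n (of_nat ` {1..n}) (of_nat k - 1/2)"
        unfolding C_def using nc b2 z V_ext[OF nc] v by auto
    qed
  next
    show "C 0 n (of_nat ` {1..n}) (of_nat k - 1/2) \<subseteq> ?\<phi> ` OV2k n k"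
    proof clarify
      fix \<pi> l assume a: "(\<pi>, l) \<in> C 0 n (of_nat ` {1..n}) (of_nat k - 1/2)"
      then have nc: "nc_pair_partition \<pi> {1..2*n}" and b: "bij_betw l \<pi> (of_nat ` {1..n})"
        and z: "\<forall>B. B \<notin> \<pi> \<longrightarrow> l B = 0" and v: "Vtop \<pi> l (of_nat k - 1/2)"
        unfolding C_def by auto
      define lab where "lab B = nat \<lfloor>l B\<rfloor>" for B
      have leq: "l = (\<lambda>B. of_nat (lab B))"
      proof
        fix B show "l B = of_nat (lab B)"
        proof (cases "B \<in> \<pi>")
          case True
          then obtain i where "l B = of_nat i" using b unfolding bij_betw_def by auto
          then show ?thesis unfolding lab_def by simp
        next
          case False then show ?thesis using z unfolding lab_def by simp
        qed
      qed
      have "inj_on lab \<pi>" using b unfolding bij_betw_def inj_on_def leq by auto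
      moreover have "(of_nat :: nat \<Rightarrow> rat) ` (lab ` \<pi>) = of_nat ` {1..n}"
        using b unfolding bij_betw_def leq by (simp add: image_image)
      then have "lab ` \<pi> = {1..n}"
        by (metis inj_image_eq_iff inj_of_nat)
      ultimately have bl: "bij_betw lab \<pi> {1..n}" unfolding bij_betw_def by simp
      have zl: "\<forall>B. B \<notin> \<pi> \<longrightarrow> lab B = 0" using z unfolding lab_def by simp
      have vt: "Vtop \<pi> (\<lambda>B. of_nat (lab B) :: rat) (of_nat k - 1/2)" using v leq by simp
      then have "V_monotone \<pi> lab"
        unfolding V_monotone_iff Vtop_def Vloc_ofnat by simp
      then have "(\<pi>, lab) \<in> OV2k n k"
        unfolding OV2k_def OV2_def using nc bl zl V_ext[OF nc] vt by auto
      then show "(\<pi>, l) \<in> ?\<phi> ` OV2k n k" using leq by (auto intro: image_eqI[where x="(\<pi>,lab)"])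
    qed
  qed
  show ?thesis unfolding N_def using card_image[OF inj] img by simp
qed

lemma part2: "N n (n + 1) = card (OV2 n)"
proof -
  have "OV2k n (n+1) = OV2 n"
  proof
    show "OV2k n (n+1) \<subseteq> OV2 n" unfolding OV2k_def by auto
  next
    show "OV2 n \<subseteq> OV2k n (n+1)"
    proof clarify
      fix \<pi> lab assume a: "(\<pi>, lab) \<in> OV2 n"
      then have nc: "nc_pair_partition \<pi> {1..2*n}" and b: "bij_betw lab \<pi> {1..n}"
        and v: "V_monotone \<pi> lab"
        unfolding OV2_def by auto
      have le: "lab B \<le> n" if "B \<in> \<pi>" for B using b that unfolding bij_betw_def by auto
      have "Vtop \<pi> (\<lambda>B. of_nat (lab B) :: rat) (of_nat (n+1) - 1/2)"
        unfolding Vtop_def Vloc_ofnat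
      proof (intro conjI ballI impI)
        show "Vloc \<pi> lab" using v V_monotone_iff by blast
      next
        fix B assume "B \<in> \<pi>" "rootp \<pi> B"
        have "(of_nat (lab B) :: rat) \<le> of_nat n" using le[OF \<open>B\<in>\<pi>\<close>] by simp
        then show "(of_nat (lab B) :: rat) \<noteq> of_nat (n+1) - 1/2" by auto
      next
        fix B B' assume "B \<in> \<pi>" "B' \<in> \<pi>" "nearest_outer \<pi> B' B \<and> rootp \<pi> B'"
        have "(of_nat (lab B') :: rat) \<le> of_nat n" using le[OF \<open>B'\<in>\<pi>\<close>] by simp
        then show "\<not> ((of_nat (lab B) :: rat) < of_nat (lab B') \<and> of_nat (n+1) - 1/2 < (of_nat (lab B') :: rat))"
          by auto
      qed
      then show "(\<pi>, lab) \<in> OV2k n (n+1)" unfolding OV2k_def using a V_ext[OF nc] by auto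
    qed
  qed
  then show ?thesis unfolding N_def by simp
qed


lemma Vtop_split:
  fixes x t :: "'a::{linorder,comm_monoid_add}"
  assumes d12: "\<pi>1 \<inter> \<pi>2 = {}" and B0n: "B0 \<notin> \<pi>1" "B0 \<notin> \<pi>2"
    and H1: "\<And>B. B\<in>\<pi>1 \<Longrightarrow> outer B0 B"
    and H2: "\<And>X. X \<in> \<pi>1 \<union> \<pi>2 \<Longrightarrow> \<not> outer X B0"
    and H3: "\<And>X B. X\<in>\<pi>2 \<Longrightarrow> B\<in>\<pi>1 \<Longrightarrow> \<not> outer X B"
    and H4: "\<And>X B. X\<in>\<pi>1 \<Longrightarrow> B\<in>\<pi>2 \<Longrightarrow> \<not> outer X B"
    and H5: "\<And>B. B\<in>\<pi>2 \<Longrightarrow> \<not> outer B0 B"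
    and z1: "\<And>B. B\<notin>\<pi>1 \<Longrightarrow> l1 B = 0" and z2: "\<And>B. B\<notin>\<pi>2 \<Longrightarrow> l2 B = 0"
  shows "Vtop (insert B0 (\<pi>1 \<union> \<pi>2)) (\<lambda>B. if B = B0 then x else l1 B + l2 B) t \<longleftrightarrow>
    Vtop \<pi>1 l1 x \<and> Vtop \<pi>2 l2 t \<and> x \<noteq> t \<and> (\<forall>B\<in>\<pi>1. rootp \<pi>1 B \<longrightarrow> \<not>(l1 B < x \<and> t < x))"
proof -
  let ?\<pi> = "insert B0 (\<pi>1 \<union> \<pi>2)"
  let ?l = "\<lambda>B. if B = B0 then x else l1 B + l2 B"
  have lab1: "?l B = l1 B" if "B\<in>\<pi>1" for B
  proof -
    have "B \<noteq> B0" "B \<notin> \<pi>2" using that B0n d12 by auto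
    then show ?thesis using z2 by simp
  qed
  have lab2: "?l B = l2 B" if "B\<in>\<pi>2" for B
  proof -
    have "B \<noteq> B0" "B \<notin> \<pi>1" using that B0n d12 by auto
    then show ?thesis using z1 by simp
  qed
  have no11: "nearest_outer ?\<pi> X B \<longleftrightarrow> nearest_outer \<pi>1 X B" if "X\<in>\<pi>1" "B\<in>\<pi>1" for X B
    using that H2 H3 unfolding nearest_outer_def by auto
  have no22: "nearest_outer ?\<pi> X B \<longleftrightarrow> nearest_outer \<pi>2 X B" if "X\<in>\<pi>2" "B\<in>\<pi>2" for X B
    using that H4 H5 unfolding nearest_outer_def by auto
  have no01: "nearest_outer ?\<pi> B0 B \<longleftrightarrow> rootp \<pi>1 B" if "B\<in>\<pi>1" for B
    using that H1 H3 outer_irrefl unfolding nearest_outer_def rootp_def by auto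
  have nox0: "\<not> nearest_outer ?\<pi> X B0" if "X \<in> ?\<pi>" for X
    using that H2 outer_irrefl unfolding nearest_outer_def by (metis (full_types) insertE)
  have no21: "\<not> nearest_outer ?\<pi> X B" if "X\<in>\<pi>2" "B\<in>\<pi>1" for X B
    using that H3 unfolding nearest_outer_def by auto
  have no12: "\<not> nearest_outer ?\<pi> X B" if "X\<in>\<pi>1" "B\<in>\<pi>2" for X B
    using that H4 unfolding nearest_outer_def by auto
  have no02: "\<not> nearest_outer ?\<pi> B0 B" if "B\<in>\<pi>2" for B
    using that H5 unfolding nearest_outer_def by auto
  have r0: "rootp ?\<pi> B0" using H2 outer_irrefl unfolding rootp_def by auto
  have r1: "\<not> rootp ?\<pi> B" if "B\<in>\<pi>1" for B using that H1 unfolding rootp_def by auto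
  have r2: "rootp ?\<pi> B \<longleftrightarrow> rootp \<pi>2 B" if "B\<in>\<pi>2" for B
    using that H3 H4 H5 unfolding rootp_def by auto
  have B0ne: "B0 \<notin> \<pi>1 \<union> \<pi>2" using B0n by simp
  have lab0: "?l B0 = x" by simp
  have c1: "(\<forall>B\<in>?\<pi>. \<forall>B'\<in>?\<pi>. nearest_outer ?\<pi> B' B \<longrightarrow> ?l B \<noteq> ?l B') \<longleftrightarrow>
     (\<forall>B\<in>\<pi>1. \<forall>B'\<in>\<pi>1. nearest_outer \<pi>1 B' B \<longrightarrow> l1 B \<noteq> l1 B') \<and>
     (\<forall>B\<in>\<pi>2. \<forall>B'\<in>\<pi>2. nearest_outer \<pi>2 B' B \<longrightarrow> l2 B \<noteq> l2 B') \<and>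
     (\<forall>B\<in>\<pi>1. rootp \<pi>1 B \<longrightarrow> l1 B \<noteq> x)"
    unfolding ball_simps ball_Un
    by (simp add: no11 no22 no01 nox0 no21 no12 no02 lab1 lab2 cong: ball_cong) blast
  have c2: "(\<forall>B\<in>?\<pi>. rootp ?\<pi> B \<longrightarrow> ?l B \<noteq> t) \<longleftrightarrow> x \<noteq> t \<and> (\<forall>B\<in>\<pi>2. rootp \<pi>2 B \<longrightarrow> l2 B \<noteq> t)"
    unfolding ball_simps ball_Un
    by (simp add: r0 r1 r2 lab1 lab2 cong: ball_cong)
  have c3: "(\<forall>B\<in>?\<pi>. \<forall>B'\<in>?\<pi>. \<forall>B''\<in>?\<pi>. nearest_outer ?\<pi> B' B \<and> nearest_outer ?\<pi> B'' B' \<longrightarrow>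
        \<not>(?l B < ?l B' \<and> ?l B'' < ?l B')) \<longleftrightarrow>
     (\<forall>B\<in>\<pi>1. \<forall>B'\<in>\<pi>1. \<forall>B''\<in>\<pi>1. nearest_outer \<pi>1 B' B \<and> nearest_outer \<pi>1 B'' B' \<longrightarrow>
        \<not>(l1 B < l1 B' \<and> l1 B'' < l1 B')) \<and>
     (\<forall>B\<in>\<pi>2. \<forall>B'\<in>\<pi>2. \<forall>B''\<in>\<pi>2. nearest_outer \<pi>2 B' B \<and> nearest_outer \<pi>2 B'' B' \<longrightarrow>
        \<not>(l2 B < l2 B' \<and> l2 B'' < l2 B')) \<and>
     (\<forall>B\<in>\<pi>1. \<forall>B'\<in>\<pi>1. nearest_outer \<pi>1 B' B \<and> rootp \<pi>1 B' \<longrightarrow> \<not>(l1 B < l1 B' \<and> x < l1 B'))"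
    unfolding ball_simps ball_Un
    by (simp add: no11 no22 no01 nox0 no21 no12 no02 lab1 lab2 cong: ball_cong) blast
  have c4: "(\<forall>B\<in>?\<pi>. \<forall>B'\<in>?\<pi>. nearest_outer ?\<pi> B' B \<and> rootp ?\<pi> B' \<longrightarrow> \<not>(?l B < ?l B' \<and> t < ?l B')) \<longleftrightarrow>
     (\<forall>B\<in>\<pi>1. rootp \<pi>1 B \<longrightarrow> \<not>(l1 B < x \<and> t < x)) \<and>
     (\<forall>B\<in>\<pi>2. \<forall>B'\<in>\<pi>2. nearest_outer \<pi>2 B' B \<and> rootp \<pi>2 B' \<longrightarrow> \<not>(l2 B < l2 B' \<and> t < l2 B'))"
    unfolding ball_simps ball_Un
    by (simp add: no11 no22 no01 nox0 no21 no12 no02 r0 r1 r2 lab1 lab2 cong: ball_cong)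
  show ?thesis
    unfolding Vtop_def Vloc_def c1 c2 c3 c4 by (intro iffI conjI; elim conjE; assumption)
qed


definition enc :: "nat set set \<Rightarrow> nat set \<Rightarrow> nat set set" where
  "enc \<pi> B = {X\<in>\<pi>. outer X B}"

lemma enc_less:
  assumes "finite \<pi>" "P \<in> \<pi>" "outer P B"
  shows "card (enc \<pi> P) < card (enc \<pi> B)"
proof -
  have "enc \<pi> P \<subseteq> enc \<pi> B" unfolding enc_def using assms outer_trans by blast
  moreover have "P \<in> enc \<pi> B" "P \<notin> enc \<pi> P" unfolding enc_def using assms outer_irrefl by auto
  ultimately have "enc \<pi> P \<subset> enc \<pi> B" by blast
  moreover have "finite (enc \<pi> B)" unfolding enc_def using assms by simp
  ultimately show ?thesis by (rule psubset_card_mono[rotated])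
qed

lemma nearest_exists:
  assumes fin: "finite \<pi>" and nr: "\<not> rootp \<pi> B"
  shows "\<exists>P\<in>\<pi>. nearest_outer \<pi> P B"
proof -
  let ?E = "enc \<pi> B"
  have fE: "finite ?E" unfolding enc_def using fin by simp
  have neE: "?E \<noteq> {}" using nr unfolding rootp_def enc_def by auto
  let ?f = "\<lambda>X. card (enc \<pi> X)"
  let ?M = "Max (?f ` ?E)"
  have "?M \<in> ?f ` ?E" using fE neE by (intro Max_in) auto
  then obtain P where P: "P \<in> ?E" "?f P = ?M" by auto
  have mx: "?f X \<le> ?f P" if "X \<in> ?E" for X using P fE that by (simp add: Max_ge)
  have "nearest_outer \<pi> P B"
    unfolding nearest_outer_def
  proof
    show "outer P B" using P unfolding enc_def by auto
    show "\<not> (\<exists>B''\<in>\<pi>. outer P B'' \<and> outer B'' B)"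
    proof
      assume "\<exists>B''\<in>\<pi>. outer P B'' \<and> outer B'' B"
      then obtain B'' where "B''\<in>\<pi>" "outer P B''" "outer B'' B" by blast
      moreover have "P \<in> \<pi>" using P unfolding enc_def by auto
      ultimately have "?f P < ?f B''" using enc_less[OF fin] by blast
      moreover have "B'' \<in> ?E" using \<open>B''\<in>\<pi>\<close> \<open>outer B'' B\<close> unfolding enc_def by auto
      ultimately show False using mx by fastforce
    qed
  qed
  then show ?thesis using P unfolding enc_def by auto
qed

lemma force_above:
  fixes x :: "'a::linorder"
  assumes fin: "finite \<pi>" and V: "Vtop \<pi> l x" and R: "\<forall>B\<in>\<pi>. rootp \<pi> B \<longrightarrow> x < l B"
  shows "\<forall>B\<in>\<pi>. x < l B"
proof -
  have V1: "\<And>B B'. B\<in>\<pi> \<Longrightarrow> B'\<in>\<pi> \<Longrightarrow> nearest_outer \<pi> B' B \<Longrightarrow> l B \<noteq> l B'"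
    and V2: "\<And>B B' B''. B\<in>\<pi> \<Longrightarrow> B'\<in>\<pi> \<Longrightarrow> B''\<in>\<pi> \<Longrightarrow> nearest_outer \<pi> B' B \<Longrightarrow> nearest_outer \<pi> B'' B'
       \<Longrightarrow> \<not>(l B < l B' \<and> l B'' < l B')"
    and V4: "\<And>B B'. B\<in>\<pi> \<Longrightarrow> B'\<in>\<pi> \<Longrightarrow> nearest_outer \<pi> B' B \<Longrightarrow> rootp \<pi> B' \<Longrightarrow> \<not>(l B < l B' \<and> x < l B')"
    using V unfolding Vtop_def Vloc_def by blast+
  have main: "B \<in> \<pi> \<Longrightarrow> x < l B \<and> (\<forall>P\<in>\<pi>. nearest_outer \<pi> P B \<longrightarrow> l P < l B)" for B
  proof (induction "card (enc \<pi> B)" arbitrary: B rule: less_induct)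
    case less
    show ?case
    proof (cases "rootp \<pi> B")
      case True
      then show ?thesis using R less.prems unfolding rootp_def nearest_outer_def by blast
    next
      case False
      have par: "l P < l B" if P: "P\<in>\<pi>" "nearest_outer \<pi> P B" for P
      proof -
        have "card (enc \<pi> P) < card (enc \<pi> B)"
          using enc_less[OF fin P(1)] P(2) unfolding nearest_outer_def by blast
        then have IH: "x < l P \<and> (\<forall>P'\<in>\<pi>. nearest_outer \<pi> P' P \<longrightarrow> l P' < l P)"
          using less.hyps P(1) by blast
        have ne: "l B \<noteq> l P" using V1[OF less.prems P(1) P(2)] .
        show ?thesis
        proof (cases "rootp \<pi> P")
          case True
          then show ?thesis using V4[OF less.prems P(1) P(2)] IH ne by auto
        next
          case False
          then obtain P' where P': "P'\<in>\<pi>" "nearest_outer \<pi> P' P" using nearest_exists[OF fin] by blast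
          then have "l P' < l P" using IH by blast
          then show ?thesis using V2[OF less.prems P(1) P'(1) P(2) P'(2)] ne by auto
        qed
      qed
      obtain P where P: "P\<in>\<pi>" "nearest_outer \<pi> P B" using nearest_exists[OF fin False] by blast
      have "card (enc \<pi> P) < card (enc \<pi> B)"
        using enc_less[OF fin P(1)] P(2) unfolding nearest_outer_def by blast
      then have "x < l P" using less.hyps P(1) by blast
      then have "x < l B" using par[OF P] by simp
      then show ?thesis using par by blast
    qed
  qed
  show ?thesis using main by blast
qed




lemma pp_block: "nc_pair_partition \<pi> S \<Longrightarrow> B \<in> \<pi> \<Longrightarrow> B \<subseteq> S \<and> card B = 2"
  unfolding nc_pair_partition_def pair_partition_def by blast

lemma card2_ne: "card B = 2 \<Longrightarrow> B \<noteq> {}" by auto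

lemma outer_elim: "outer X B \<Longrightarrow> \<exists>p\<in>X. \<exists>p'\<in>X. \<forall>k\<in>B. p < k \<and> k < p'"
  unfolding outer_def by blast

lemma geom:
  fixes a m n :: nat
  assumes p1: "nc_pair_partition \<pi>1 {a+1+1..a+1+2*m}"
    and p2: "nc_pair_partition \<pi>2 {a+2*m+2+1..a+2*m+2+2*(n-m)}"
  shows "\<pi>1 \<inter> \<pi>2 = {}" "{a+1,a+2*m+2} \<notin> \<pi>1" "{a+1,a+2*m+2} \<notin> \<pi>2"
    "\<And>B. B\<in>\<pi>1 \<Longrightarrow> outer {a+1,a+2*m+2} B"
    "\<And>X. X \<in> \<pi>1 \<union> \<pi>2 \<Longrightarrow> \<not> outer X {a+1,a+2*m+2}"
    "\<And>X B. X\<in>\<pi>2 \<Longrightarrow> B\<in>\<pi>1 \<Longrightarrow> \<not> outer X B"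
    "\<And>X B. X\<in>\<pi>1 \<Longrightarrow> B\<in>\<pi>2 \<Longrightarrow> \<not> outer X B"
    "\<And>B. B\<in>\<pi>2 \<Longrightarrow> \<not> outer {a+1,a+2*m+2} B"
proof -
  have s1: "\<And>k. k \<in> B \<Longrightarrow> a+2 \<le> k \<and> k \<le> a+2*m+1" if "B\<in>\<pi>1" for B
    using pp_block[OF p1 that] by auto
  have s2: "\<And>k. k \<in> B \<Longrightarrow> a+2*m+3 \<le> k" if "B\<in>\<pi>2" for B
    using pp_block[OF p2 that] by auto
  have n1: "\<exists>k. k \<in> B" if "B\<in>\<pi>1" for B
    using pp_block[OF p1 that] card2_ne by blast
  have n2: "\<exists>k. k \<in> B" if "B\<in>\<pi>2" for B
    using pp_block[OF p2 that] card2_ne by blast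
  show "\<pi>1 \<inter> \<pi>2 = {}"
  proof (rule ccontr)
    assume "\<pi>1 \<inter> \<pi>2 \<noteq> {}"
    then obtain B where B: "B\<in>\<pi>1" "B\<in>\<pi>2" by blast
    then obtain k where "k \<in> B" using n1 by blast
    then show False using s1[OF B(1)] s2[OF B(2)] by force
  qed
  show "{a+1,a+2*m+2} \<notin> \<pi>1"
  proof
    assume "{a+1,a+2*m+2} \<in> \<pi>1"
    from s1[OF this, of "a+1"] show False by simp
  qed
  show "{a+1,a+2*m+2} \<notin> \<pi>2"
  proof
    assume "{a+1,a+2*m+2} \<in> \<pi>2"
    from s2[OF this, of "a+1"] show False by simp
  qed
  show "outer {a+1,a+2*m+2} B" if "B\<in>\<pi>1" for B
  proof (subst outer_pair)
    show "a + 1 < a + 2 * m + 2" by simp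
    show "\<forall>k\<in>B. a + 1 < k \<and> k < a + 2 * m + 2" using s1[OF that] by force
  qed
  show "\<not> outer X {a+1,a+2*m+2}" if H: "X \<in> \<pi>1 \<union> \<pi>2" for X
  proof
    assume "outer X {a+1,a+2*m+2}"
    then obtain p where p: "p\<in>X" "p < a+1" using outer_elim by blast
    show False
    proof (cases "X \<in> \<pi>1")
      case True then show False using s1[OF True p(1)] p(2) by simp
    next
      case False then have "X \<in> \<pi>2" using H by simp
      then show False using s2[OF _ p(1)] p(2) by simp
    qed
  qed
  show "\<not> outer X B" if H: "X\<in>\<pi>2" "B\<in>\<pi>1" for X B
  proof
    assume "outer X B"
    then obtain p where p: "p\<in>X" "\<forall>k\<in>B. p < k" using outer_elim by blast
    obtain k where k: "k \<in> B" using n1[OF H(2)] by blast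
    have "p < k" using p k by blast
    then show False using s1[OF H(2) k] s2[OF H(1) p(1)] by simp
  qed
  show "\<not> outer X B" if H: "X\<in>\<pi>1" "B\<in>\<pi>2" for X B
  proof
    assume "outer X B"
    then obtain p where p: "p\<in>X" "\<forall>k\<in>B. k < p" using outer_elim by blast
    obtain k where k: "k \<in> B" using n2[OF H(2)] by blast
    have "k < p" using p k by blast
    then show False using s1[OF H(1) p(1)] s2[OF H(2) k] by simp
  qed
  show "\<not> outer {a+1,a+2*m+2} B" if H: "B\<in>\<pi>2" for B
  proof
    assume "outer {a+1,a+2*m+2} B"
    then have "\<forall>k\<in>B. k < a+2*m+2" by (subst (asm) outer_pair) auto
    moreover obtain k where k: "k \<in> B" using n2[OF H] by blast
    ultimately show False using s2[OF H k] by force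
  qed
qed

lemma no_cross_sep:
  fixes X Y :: "nat set"
  assumes "\<forall>x\<in>X. \<forall>y\<in>Y. x < y"
  shows "\<not>(\<exists>a b c d. a<b \<and> b<c \<and> c<d \<and> a\<in>X \<and> c\<in>X \<and> b\<in>Y \<and> d\<in>Y)"
        "\<not>(\<exists>a b c d. a<b \<and> b<c \<and> c<d \<and> a\<in>Y \<and> c\<in>Y \<and> b\<in>X \<and> d\<in>X)"
proof
  assume "\<exists>a b c d. a<b \<and> b<c \<and> c<d \<and> a\<in>X \<and> c\<in>X \<and> b\<in>Y \<and> d\<in>Y"
  then obtain b c where "b < c" "c \<in> X" "b \<in> Y" by blast
  moreover have "c < b" using assms calculation by blast
  ultimately show False by simp
next
  show "\<not>(\<exists>a b c d. a<b \<and> b<c \<and> c<d \<and> a\<in>Y \<and> c\<in>Y \<and> b\<in>X \<and> d\<in>X)"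
  proof
    assume "\<exists>a b c d. a<b \<and> b<c \<and> c<d \<and> a\<in>Y \<and> c\<in>Y \<and> b\<in>X \<and> d\<in>X"
    then obtain c d where "c < d" "c \<in> Y" "d \<in> X" by blast
    moreover have "d < c" using assms calculation by blast
    ultimately show False by simp
  qed
qed

lemma no_cross_nest:
  fixes X :: "nat set"
  assumes "\<forall>x\<in>X. u < x \<and> x < v"
  shows "\<not>(\<exists>a b c d. a<b \<and> b<c \<and> c<d \<and> a\<in>X \<and> c\<in>X \<and> b\<in>{u,v} \<and> d\<in>{u,v})"
        "\<not>(\<exists>a b c d. a<b \<and> b<c \<and> c<d \<and> a\<in>{u,v} \<and> c\<in>{u,v} \<and> b\<in>X \<and> d\<in>X)"
proof
  assume "\<exists>a b c d. a<b \<and> b<c \<and> c<d \<and> a\<in>X \<and> c\<in>X \<and> b\<in>{u,v} \<and> d\<in>{u,v}"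
  then obtain a b c d where h: "a<b" "b<c" "c<d" "a\<in>X" "c\<in>X" "b\<in>{u,v}" "d\<in>{u,v}" by blast
  have "u < a" "c < v" using assms h by auto
  then show False using h by auto
next
  show "\<not>(\<exists>a b c d. a<b \<and> b<c \<and> c<d \<and> a\<in>{u,v} \<and> c\<in>{u,v} \<and> b\<in>X \<and> d\<in>X)"
  proof
    assume "\<exists>a b c d. a<b \<and> b<c \<and> c<d \<and> a\<in>{u,v} \<and> c\<in>{u,v} \<and> b\<in>X \<and> d\<in>X"
    then obtain a b c d where h: "a<b" "b<c" "c<d" "a\<in>{u,v}" "c\<in>{u,v}" "b\<in>X" "d\<in>X" by blast
    have "u < b" "d < v" using assms h by auto
    then show False using h by auto
  qed
qed

lemma compose_nc:
  fixes a m n :: nat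
  assumes mn: "m \<le> n" and p1: "nc_pair_partition \<pi>1 {a+1+1..a+1+2*m}"
    and p2: "nc_pair_partition \<pi>2 {a+2*m+2+1..a+2*m+2+2*(n-m)}"
  shows "nc_pair_partition (insert {a+1,a+2*m+2} (\<pi>1 \<union> \<pi>2)) {a+1..a+2*(n+1)}"
proof -
  let ?B0 = "{a+1,a+2*m+2}"
  have s1: "\<And>k. k \<in> B \<Longrightarrow> a+2 \<le> k \<and> k \<le> a+2*m+1" if "B\<in>\<pi>1" for B
    using pp_block[OF p1 that] by auto
  have s2: "\<And>k. k \<in> B \<Longrightarrow> a+2*m+3 \<le> k" if "B\<in>\<pi>2" for B
    using pp_block[OF p2 that] by auto
  have pp1: "pair_partition \<pi>1 {a+1+1..a+1+2*m}" and nc1: "noncrossing \<pi>1"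
    using p1 unfolding nc_pair_partition_def by auto
  have pp2: "pair_partition \<pi>2 {a+2*m+2+1..a+2*m+2+2*(n-m)}" and nc2: "noncrossing \<pi>2"
    using p2 unfolding nc_pair_partition_def by auto
  have U: "\<Union>(insert ?B0 (\<pi>1 \<union> \<pi>2)) = {a+1..a+2*(n+1)}"
  proof -
    have "\<Union>\<pi>1 = {a+1+1..a+1+2*m}" "\<Union>\<pi>2 = {a+2*m+2+1..a+2*m+2+2*(n-m)}"
      using pp1 pp2 unfolding pair_partition_def by auto
    moreover have "{a+1..a+2*(n+1)} = {a+1,a+2*m+2} \<union> ({a+1+1..a+1+2*m} \<union> {a+2*m+2+1..a+2*m+2+2*(n-m)})"
      using mn by (intro set_eqI) (simp; arith)
    ultimately show ?thesis by (simp add: Union_Un_distrib)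
  qed
  have pp: "pair_partition (insert ?B0 (\<pi>1 \<union> \<pi>2)) {a+1..a+2*(n+1)}"
    unfolding pair_partition_def
  proof (intro conjI)
    show "\<forall>B\<in>insert ?B0 (\<pi>1 \<union> \<pi>2). card B = 2" using pp1 pp2 unfolding pair_partition_def by auto
    show "\<Union>(insert ?B0 (\<pi>1 \<union> \<pi>2)) = {a+1..a+2*(n+1)}" by (rule U)
    show "\<forall>B\<in>insert ?B0 (\<pi>1 \<union> \<pi>2). \<forall>B'\<in>insert ?B0 (\<pi>1 \<union> \<pi>2). B \<noteq> B' \<longrightarrow> B \<inter> B' = {}"
    proof (intro ballI impI)
      fix B B' assume B: "B \<in> insert ?B0 (\<pi>1 \<union> \<pi>2)" and B': "B' \<in> insert ?B0 (\<pi>1 \<union> \<pi>2)" and ne: "B \<noteq> B'"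
      have d1: "B \<inter> B' = {}" if "B \<in> \<pi>1" "B' \<in> \<pi>1" using pp1 that ne unfolding pair_partition_def by blast
      have d2: "B \<inter> B' = {}" if "B \<in> \<pi>2" "B' \<in> \<pi>2" using pp2 that ne unfolding pair_partition_def by blast
      show "B \<inter> B' = {}"
      proof (rule ccontr)
        assume "B \<inter> B' \<noteq> {}"
        then obtain k where k: "k \<in> B" "k \<in> B'" by blast
        consider "B = ?B0" "B' \<in> \<pi>1" | "B = ?B0" "B' \<in> \<pi>2" | "B \<in> \<pi>1" "B' = ?B0" | "B \<in> \<pi>2" "B' = ?B0"
          | "B \<in> \<pi>1" "B' \<in> \<pi>1" | "B \<in> \<pi>2" "B' \<in> \<pi>2" | "B \<in> \<pi>1" "B' \<in> \<pi>2" | "B \<in> \<pi>2" "B' \<in> \<pi>1"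
          using B B' ne by auto
        then show False
        proof cases
          case 1 then show ?thesis using s1[OF 1(2) k(2)] k(1) by auto
        next
          case 2 then show ?thesis using s2[OF 2(2) k(2)] k(1) by auto
        next
          case 3 then show ?thesis using s1[OF 3(1) k(1)] k(2) by auto
        next
          case 4 then show ?thesis using s2[OF 4(1) k(1)] k(2) by auto
        next
          case 5 then show ?thesis using d1 k by blast
        next
          case 6 then show ?thesis using d2 k by blast
        next
          case 7 then show ?thesis using s1[OF 7(1) k(1)] s2[OF 7(2) k(2)] by simp
        next
          case 8 then show ?thesis using s2[OF 8(1) k(1)] s1[OF 8(2) k(2)] by simp
        qed
      qed
    qed
  qed
  have nc: "noncrossing (insert ?B0 (\<pi>1 \<union> \<pi>2))"
    unfolding noncrossing_def
  proof (intro ballI impI)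
    fix B B' assume B: "B \<in> insert ?B0 (\<pi>1 \<union> \<pi>2)" and B': "B' \<in> insert ?B0 (\<pi>1 \<union> \<pi>2)" and ne: "B \<noteq> B'"
    have sep12: "\<forall>x\<in>X. \<forall>y\<in>Y. x < y" if "X\<in>\<pi>1" "Y\<in>\<pi>2" for X Y
    proof (intro ballI)
      fix x y assume "x \<in> X" "y \<in> Y"
      then show "x < y" using s1[OF that(1) \<open>x\<in>X\<close>] s2[OF that(2) \<open>y\<in>Y\<close>] by simp
    qed
    have sep02: "\<forall>x\<in>?B0. \<forall>y\<in>Y. x < y" if "Y\<in>\<pi>2" for Y
    proof (intro ballI)
      fix x y assume "x \<in> ?B0" "y \<in> Y"
      then show "x < y" using s2[OF that \<open>y\<in>Y\<close>] by auto
    qed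
    have nest: "\<forall>x\<in>X. a+1 < x \<and> x < a+2*m+2" if "X\<in>\<pi>1" for X
    proof (intro ballI)
      fix x assume "x \<in> X"
      then show "a+1 < x \<and> x < a+2*m+2" using s1[OF that \<open>x\<in>X\<close>] by simp
    qed
    consider "B = ?B0" "B' \<in> \<pi>1" | "B = ?B0" "B' \<in> \<pi>2" | "B \<in> \<pi>1" "B' = ?B0" | "B \<in> \<pi>2" "B' = ?B0"
      | "B \<in> \<pi>1" "B' \<in> \<pi>1" | "B \<in> \<pi>2" "B' \<in> \<pi>2" | "B \<in> \<pi>1" "B' \<in> \<pi>2" | "B \<in> \<pi>2" "B' \<in> \<pi>1"
      using B B' ne by auto
    then show "\<not> (\<exists>a b c d. a < b \<and> b < c \<and> c < d \<and> a \<in> B \<and> c \<in> B \<and> b \<in> B' \<and> d \<in> B')"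
    proof cases
      case 1 then show ?thesis using no_cross_nest(2)[OF nest[OF 1(2)]] by simp
    next
      case 2 then show ?thesis using no_cross_sep(1)[OF sep02[OF 2(2)]] by simp
    next
      case 3 then show ?thesis using no_cross_nest(1)[OF nest[OF 3(1)]] by simp
    next
      case 4 then show ?thesis using no_cross_sep(2)[OF sep02[OF 4(1)]] by simp
    next
      case 5 show ?thesis using nc1[unfolded noncrossing_def, rule_format, OF 5(1) 5(2) ne] by simp
    next
      case 6 show ?thesis using nc2[unfolded noncrossing_def, rule_format, OF 6(1) 6(2) ne] by simp
    next
      case 7 then show ?thesis using no_cross_sep(1)[OF sep12[OF 7(1) 7(2)]] by simp
    next
      case 8 then show ?thesis using no_cross_sep(2)[OF sep12[OF 8(2) 8(1)]] by simp
      qed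
  qed
  show ?thesis unfolding nc_pair_partition_def using pp nc by simp
qed


lemma nc_sub: assumes "noncrossing \<pi>" "\<pi>' \<subseteq> \<pi>" shows "noncrossing \<pi>'"
  unfolding noncrossing_def
proof (intro ballI impI)
  fix B B' assume h: "B\<in>\<pi>'" "B'\<in>\<pi>'" "B \<noteq> B'"
  have "B \<in> \<pi>" "B' \<in> \<pi>" using h assms(2) by auto
  then show "\<not> (\<exists>a b c d. a < b \<and> b < c \<and> c < d \<and> a \<in> B \<and> c \<in> B \<and> b \<in> B' \<and> d \<in> B')"
    using assms(1)[unfolded noncrossing_def, rule_format, of B B'] h(3) by simp
qed

lemma pp_restrict:
  assumes "nc_pair_partition \<pi> S" "\<Union>{B\<in>\<pi>. B \<subseteq> T} = T"
  shows "nc_pair_partition {B\<in>\<pi>. B \<subseteq> T} T"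
proof -
  have pp: "pair_partition \<pi> S" and nc: "noncrossing \<pi>" using assms(1) unfolding nc_pair_partition_def by auto
  have "pair_partition {B\<in>\<pi>. B \<subseteq> T} T"
    unfolding pair_partition_def
  proof (intro conjI)
    show "\<forall>B\<in>{B \<in> \<pi>. B \<subseteq> T}. card B = 2" using pp unfolding pair_partition_def by simp
    show "\<Union> {B \<in> \<pi>. B \<subseteq> T} = T" by (rule assms(2))
    show "\<forall>B\<in>{B \<in> \<pi>. B \<subseteq> T}. \<forall>B'\<in>{B \<in> \<pi>. B \<subseteq> T}. B \<noteq> B' \<longrightarrow> B \<inter> B' = {}"
      using pp unfolding pair_partition_def by simp
  qed
  moreover have "noncrossing {B\<in>\<pi>. B \<subseteq> T}" by (rule nc_sub[OF nc]) auto
  ultimately show ?thesis unfolding nc_pair_partition_def by simp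
qed

lemma card_Union_pairs:
  assumes "nc_pair_partition \<pi> S" "finite S"
  shows "card (\<Union>\<pi>) = 2 * card \<pi>"
proof -
  have pp: "pair_partition \<pi> S" using assms unfolding nc_pair_partition_def by simp
  have "\<pi> \<subseteq> Pow S" using pp unfolding pair_partition_def by blast
  then have fin: "finite \<pi>" using assms(2) by (meson finite_Pow_iff finite_subset)
  have "pairwise disjnt \<pi>" using pp unfolding pair_partition_def pairwise_def disjnt_def by blast
  moreover have "\<And>A. A \<in> \<pi> \<Longrightarrow> finite A"
  proof -
    fix A assume "A \<in> \<pi>"
    then have "card A = 2" using pp unfolding pair_partition_def by simp
    then show "finite A" by (intro card_ge_0_finite) simp
  qed
  ultimately have "card (\<Union>\<pi>) = sum card \<pi>" by (rule card_Union_disjoint)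
  also have "\<dots> = sum (\<lambda>_. 2) \<pi>" using pp unfolding pair_partition_def by (intro sum.cong) auto
  also have "\<dots> = 2 * card \<pi>" by simp
  finally show ?thesis .
qed

lemma decompose_nc:
  fixes a n :: nat
  assumes P: "nc_pair_partition \<pi> {a+1..a+2*(n+1)}"
  shows "\<exists>m\<le>n. {a+1,a+2*m+2} \<in> \<pi> \<and>
     nc_pair_partition {B\<in>\<pi>. B \<subseteq> {a+1+1..a+1+2*m}} {a+1+1..a+1+2*m} \<and>
     nc_pair_partition {B\<in>\<pi>. B \<subseteq> {a+2*m+2+1..a+2*m+2+2*(n-m)}} {a+2*m+2+1..a+2*m+2+2*(n-m)} \<and>
     \<pi> = insert {a+1,a+2*m+2} ({B\<in>\<pi>. B \<subseteq> {a+1+1..a+1+2*m}} \<union> {B\<in>\<pi>. B \<subseteq> {a+2*m+2+1..a+2*m+2+2*(n-m)}})"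
proof -
  let ?S = "{a+1..a+2*(n+1)}"
  have pp: "pair_partition \<pi> ?S" and nc: "noncrossing \<pi>" using P unfolding nc_pair_partition_def by auto
  have U: "\<Union>\<pi> = ?S" and C2: "\<And>B. B\<in>\<pi> \<Longrightarrow> card B = 2"
    and D: "\<And>B B'. B\<in>\<pi> \<Longrightarrow> B'\<in>\<pi> \<Longrightarrow> B \<noteq> B' \<Longrightarrow> B \<inter> B' = {}"
    using pp unfolding pair_partition_def by auto
  have "a+1 \<in> \<Union>\<pi>" using U by simp
  then obtain B0 where B0: "B0 \<in> \<pi>" "a+1 \<in> B0" by blast
  obtain b where b: "b \<in> B0" "b \<noteq> a+1" "B0 = {a+1, b}"
  proof -
    obtain x y where "B0 = {x,y}" "x \<noteq> y" using C2[OF B0(1)] unfolding card_2_iff by blast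
    then show ?thesis using that B0(2) by (cases "x = a+1") auto
  qed
  have "b \<in> \<Union>\<pi>" using b(1) B0(1) by blast
  then have "b \<in> ?S" using U by simp
  then have bS: "a+1 < b" "b \<le> a+2*(n+1)" using b(2) by auto
  have key: "B \<subseteq> {a+2..b-1} \<or> B \<subseteq> {b+1..a+2*(n+1)}" if B: "B\<in>\<pi>" "B \<noteq> B0" for B
  proof -
    obtain c d where cd: "B = {c,d}" "c < d"
    proof -
      obtain x y where xy: "B = {x,y}" "x \<noteq> y" using C2[OF B(1)] unfolding card_2_iff by blast
      show ?thesis
      proof (cases "x < y")
        case True then show ?thesis using that xy by blast
      next
        case False then have "y < x" using xy(2) by simp
        then show ?thesis using that[of y x] xy(1) by (simp add: insert_commute)
      qed
    qed
    have dis: "B \<inter> B0 = {}" using D[OF B(1) B0(1)] B(2) by simp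
    have "c \<in> \<Union>\<pi>" "d \<in> \<Union>\<pi>" using cd B(1) by blast+
    then have cdS: "c \<in> ?S" "d \<in> ?S" using U by simp_all
    have cne: "c \<noteq> a+1" "c \<noteq> b" "d \<noteq> a+1" "d \<noteq> b" using dis cd b by auto
    have "\<not> (c < b \<and> b < d)"
    proof
      assume "c < b \<and> b < d"
      then have "a+1 < c \<and> c < b \<and> b < d \<and> a+1 \<in> B0 \<and> b \<in> B0 \<and> c \<in> B \<and> d \<in> B"
        using cdS cne b cd by auto
      then show False using nc[unfolded noncrossing_def, rule_format, OF B0(1) B(1) B(2)[symmetric]] by blast
    qed
    then have "d < b \<or> b < c" using cne cd by auto
    then show ?thesis using cd cdS cne by auto
  qed
  let ?P1 = "{B\<in>\<pi>. B \<subseteq> {a+2..b-1}}"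
  let ?P2 = "{B\<in>\<pi>. B \<subseteq> {b+1..a+2*(n+1)}}"
  have U1: "\<Union>?P1 = {a+2..b-1}"
  proof
    show "\<Union>?P1 \<subseteq> {a+2..b-1}" by blast
    show "{a+2..b-1} \<subseteq> \<Union>?P1"
    proof
      fix y assume y: "y \<in> {a+2..b-1}"
      then have "y \<in> ?S" using bS by auto
      then have "y \<in> \<Union>\<pi>" using U by simp
      then obtain B where B: "B\<in>\<pi>" "y\<in>B" by blast
      have "B \<noteq> B0" using y b B bS by auto
      moreover have "\<not> B \<subseteq> {b+1..a+2*(n+1)}"
      proof
        assume "B \<subseteq> {b+1..a+2*(n+1)}"
        then have "y \<in> {b+1..a+2*(n+1)}" using B(2) by blast
        then have "b+1 \<le> y" "y \<le> b-1" using y by auto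
        then show False by arith
      qed
      ultimately have "B \<subseteq> {a+2..b-1}" using key[OF B(1)] by blast
      then show "y \<in> \<Union>?P1" using B by blast
    qed
  qed
  have U2: "\<Union>?P2 = {b+1..a+2*(n+1)}"
  proof
    show "\<Union>?P2 \<subseteq> {b+1..a+2*(n+1)}" by blast
    show "{b+1..a+2*(n+1)} \<subseteq> \<Union>?P2"
    proof
      fix y assume y: "y \<in> {b+1..a+2*(n+1)}"
      then have "y \<in> ?S" using bS by auto
      then have "y \<in> \<Union>\<pi>" using U by simp
      then obtain B where B: "B\<in>\<pi>" "y\<in>B" by blast
      have "B \<noteq> B0" using y b B bS by auto
      moreover have "\<not> B \<subseteq> {a+2..b-1}"
      proof
        assume "B \<subseteq> {a+2..b-1}"
        then have "y \<in> {a+2..b-1}" using B(2) by blast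
        then have "b+1 \<le> y" "y \<le> b-1" using y by auto
        then show False by arith
      qed
      ultimately have "B \<subseteq> {b+1..a+2*(n+1)}" using key[OF B(1)] by blast
      then show "y \<in> \<Union>?P2" using B by blast
    qed
  qed
  have nc1: "nc_pair_partition ?P1 {a+2..b-1}" by (rule pp_restrict[OF P U1])
  have nc2: "nc_pair_partition ?P2 {b+1..a+2*(n+1)}" by (rule pp_restrict[OF P U2])
  define m where "m = card ?P1"
  have "card (\<Union>?P1) = 2 * m" unfolding m_def by (rule card_Union_pairs[OF nc1]) simp
  then have bm: "b = a + 2*m + 2" using U1 bS by simp
  have mn: "m \<le> n" using bS bm by simp
  have e1: "{a+2..b-1} = {a+1+1..a+1+2*m}" using bm by simp
  have "a+2*(n+1) = a+2*m+2+2*(n-m)" using mn by arith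
  then have e2: "{b+1..a+2*(n+1)} = {a+2*m+2+1..a+2*m+2+2*(n-m)}" using bm by simp
  have "\<pi> = insert B0 (?P1 \<union> ?P2)" using key B0(1) by blast
  moreover have B0eq: "B0 = {a+1,a+2*m+2}" using b(3) bm by simp
  moreover note nc1[unfolded e1] nc2[unfolded e2]
  ultimately show ?thesis using mn B0(1) unfolding e1 e2 by blast
qed



lemma finite_C: assumes "finite L" shows "finite (C a n L t)"
proof -
  let ?S = "{a+1..a+2*n}"
  let ?F = "{f. \<forall>x. (x \<in> Pow ?S \<longrightarrow> f x \<in> insert 0 L) \<and> (x \<notin> Pow ?S \<longrightarrow> f x = (0::rat))}"
  have "C a n L t \<subseteq> Pow (Pow ?S) \<times> ?F"
  proof clarify
    fix \<pi> lab assume h: "(\<pi>, lab) \<in> C a n L t"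
    then have nc: "nc_pair_partition \<pi> ?S" and b: "bij_betw lab \<pi> L" and z: "\<forall>B. B\<notin>\<pi> \<longrightarrow> lab B = 0"
      unfolding C_def by auto
    have sub: "\<pi> \<subseteq> Pow ?S" using block_sub[OF nc] by blast
    have "lab \<in> ?F"
      unfolding mem_Collect_eq
    proof (intro allI conjI impI)
      fix B assume "B \<in> Pow ?S"
      show "lab B \<in> insert 0 L"
      proof (cases "B \<in> \<pi>")
        case True then show ?thesis using b unfolding bij_betw_def by blast
      next
        case False then show ?thesis using z by simp
      qed
    next
      fix B assume "B \<notin> Pow ?S"
      then have "B \<notin> \<pi>" using sub by blast
      then show "lab B = 0" using z by blast
    qed
    then show "\<pi> \<in> Pow (Pow ?S) \<and> lab \<in> ?F" using sub by blast
  qed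
  moreover have "finite (Pow (Pow ?S) \<times> ?F)"
    using finite_set_of_finite_funs[of "Pow ?S" "insert 0 L" 0] assms by simp
  ultimately show ?thesis by (rule finite_subset)
qed

lemma the_m:
  assumes nc: "nc_pair_partition \<pi> S" and m: "{a+1, a+2*m+2} \<in> \<pi>"
  shows "(THE m. {a+1, a+2*m+2} \<in> \<pi>) = (m::nat)"
proof (rule the_equality)
  show "{a+1, a+2*m+2} \<in> \<pi>" by (rule m)
  fix m' assume m': "{a+1, a+2*m'+2} \<in> \<pi>"
  have D: "\<And>B B'. B\<in>\<pi> \<Longrightarrow> B'\<in>\<pi> \<Longrightarrow> B \<noteq> B' \<Longrightarrow> B \<inter> B' = {}"
    using nc unfolding nc_pair_partition_def pair_partition_def by blast
  have "{a+1, a+2*m'+2} = {a+1, a+2*m+2}"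
  proof (rule ccontr)
    assume "{a+1, a+2*m'+2} \<noteq> {a+1, a+2*m+2}"
    from D[OF m' m this] show False by simp
  qed
  then show "m' = m" by (auto simp: doubleton_eq_iff)
qed

definition Psi :: "nat \<Rightarrow> (nat \<times> rat set \<times> rat) \<times> ((nat set set \<times> (nat set \<Rightarrow> rat)) \<times> (nat set set \<times> (nat set \<Rightarrow> rat)))
   \<Rightarrow> nat set set \<times> (nat set \<Rightarrow> rat)" where
  "Psi a = (\<lambda>((m,L1,x),((\<pi>1,l1),(\<pi>2,l2))). (insert {a+1,a+2*m+2} (\<pi>1 \<union> \<pi>2),
      \<lambda>B. if B = {a+1,a+2*m+2} then x else l1 B + l2 B))"

definition Dl :: "nat \<Rightarrow> nat \<Rightarrow> nat set set \<times> (nat set \<Rightarrow> rat) \<Rightarrow>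
    (nat \<times> rat set \<times> rat) \<times> ((nat set set \<times> (nat set \<Rightarrow> rat)) \<times> (nat set set \<times> (nat set \<Rightarrow> rat)))" where
  "Dl a n z = (let \<pi> = fst z; lab = snd z; m = (THE m. {a+1,a+2*m+2} \<in> \<pi>);
      \<pi>1 = {B\<in>\<pi>. B \<subseteq> {a+1+1..a+1+2*m}}; \<pi>2 = {B\<in>\<pi>. B \<subseteq> {a+2*m+2+1..a+2*m+2+2*(n-m)}} in
     ((m, (insert (lab {a+1,a+2*m+2}) (lab ` \<pi>1), lab {a+1,a+2*m+2})),
      ((\<pi>1, \<lambda>B. if B\<in>\<pi>1 then lab B else 0), (\<pi>2, \<lambda>B. if B\<in>\<pi>2 then lab B else 0))))"

definition Idx :: "nat \<Rightarrow> rat set \<Rightarrow> rat \<Rightarrow> (nat \<times> rat set \<times> rat) set" where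
  "Idx n L t = Sigma {0..n} (\<lambda>m. Sigma {L1. L1 \<subseteq> L \<and> card L1 = m+1} (\<lambda>L1. {x\<in>L1. t < x \<longrightarrow> (\<forall>y\<in>L1. x \<le> y)}))"

definition Dset :: "nat \<Rightarrow> nat \<Rightarrow> rat set \<Rightarrow> rat \<Rightarrow> _" where
  "Dset a n L t = Sigma (Idx n L t) (\<lambda>(m,L1,x). C (a+1) m (L1 - {x}) x \<times> C (a+2*m+2) (n-m) (L - L1) t)"


lemma Psi_in_aux:
  fixes a m n :: nat and x t :: rat
  assumes mn: "m \<le> n" and L1: "L1 \<subseteq> L" "x \<in> L1" and cond: "t < x \<longrightarrow> (\<forall>y\<in>L1. x \<le> y)"
    and tL: "t \<notin> L"
    and c1: "(\<pi>1,l1) \<in> C (a+1) m (L1 - {x}) x"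
    and c2: "(\<pi>2,l2) \<in> C (a+2*m+2) (n-m) (L - L1) t"
  shows "(insert {a+1,a+2*m+2} (\<pi>1 \<union> \<pi>2), \<lambda>B. if B = {a+1,a+2*m+2} then x else l1 B + l2 B) \<in> C a (n+1) L t"
proof -
  let ?B0 = "{a+1,a+2*m+2}"
  let ?l = "\<lambda>B. if B = ?B0 then x else l1 B + l2 B"
  have nc1: "nc_pair_partition \<pi>1 {a+1+1..a+1+2*m}" and b1: "bij_betw l1 \<pi>1 (L1 - {x})"
    and z1: "\<forall>B. B\<notin>\<pi>1 \<longrightarrow> l1 B = 0" and V1: "Vtop \<pi>1 l1 x"
    using c1 unfolding C_def by auto
  have nc2: "nc_pair_partition \<pi>2 {a+2*m+2+1..a+2*m+2+2*(n-m)}" and b2: "bij_betw l2 \<pi>2 (L - L1)"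
    and z2: "\<forall>B. B\<notin>\<pi>2 \<longrightarrow> l2 B = 0" and V2: "Vtop \<pi>2 l2 t"
    using c2 unfolding C_def by auto
  note g = geom[OF nc1 nc2]
  have nc: "nc_pair_partition (insert ?B0 (\<pi>1 \<union> \<pi>2)) {a+1..a+2*(n+1)}"
    by (rule compose_nc[OF mn nc1 nc2])
  have lab1: "?l B = l1 B" if "B\<in>\<pi>1" for B
  proof -
    have "B \<noteq> ?B0" "B \<notin> \<pi>2" using that g(1) g(2) by auto
    then show ?thesis using z2 by simp
  qed
  have lab2: "?l B = l2 B" if "B\<in>\<pi>2" for B
  proof -
    have "B \<noteq> ?B0" "B \<notin> \<pi>1" using that g(1) g(3) by auto
    then show ?thesis using z1 by simp
  qed
  have "bij_betw ?l \<pi>1 (L1 - {x}) = bij_betw l1 \<pi>1 (L1 - {x})" by (rule bij_betw_cong) (rule lab1)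
  then have bb1: "bij_betw ?l \<pi>1 (L1 - {x})" using b1 by simp
  have "bij_betw ?l \<pi>2 (L - L1) = bij_betw l2 \<pi>2 (L - L1)" by (rule bij_betw_cong) (rule lab2)
  then have bb2: "bij_betw ?l \<pi>2 (L - L1)" using b2 by simp
  have bb0: "bij_betw ?l {?B0} {x}" by simp
  have "bij_betw ?l ({?B0} \<union> (\<pi>1 \<union> \<pi>2)) ({x} \<union> ((L1 - {x}) \<union> (L - L1)))"
    using L1 by (intro bij_betw_combine[OF bb0] bij_betw_combine[OF bb1 bb2]) auto
  moreover have "{x} \<union> ((L1 - {x}) \<union> (L - L1)) = L" using L1 by auto
  ultimately have bij: "bij_betw ?l (insert ?B0 (\<pi>1 \<union> \<pi>2)) L" by simp
  have zz: "\<forall>B. B \<notin> insert ?B0 (\<pi>1 \<union> \<pi>2) \<longrightarrow> ?l B = 0" using z1 z2 by simp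
  have "Vtop (insert ?B0 (\<pi>1 \<union> \<pi>2)) ?l t"
  proof (subst Vtop_split[OF g(1) g(2) g(3) g(4) g(5) g(6) g(7) g(8)])
    show "\<And>B. B \<notin> \<pi>1 \<Longrightarrow> l1 B = 0" using z1 by simp
    show "\<And>B. B \<notin> \<pi>2 \<Longrightarrow> l2 B = 0" using z2 by simp
    have xt: "x \<noteq> t" using tL L1 by auto
    have cr: "\<forall>B\<in>\<pi>1. rootp \<pi>1 B \<longrightarrow> \<not> (l1 B < x \<and> t < x)"
    proof (intro ballI impI notI)
      fix B assume B: "B \<in> \<pi>1" "rootp \<pi>1 B" "l1 B < x \<and> t < x"
      then have "l1 B \<in> L1" using b1 unfolding bij_betw_def by auto
      then show False using cond B(3) by auto
    qed
    show "Vtop \<pi>1 l1 x \<and> Vtop \<pi>2 l2 t \<and> x \<noteq> t \<and> (\<forall>B\<in>\<pi>1. rootp \<pi>1 B \<longrightarrow> \<not> (l1 B < x \<and> t < x))"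
      using V1 V2 xt cr by simp
  qed
  then show ?thesis unfolding C_def using nc bij zz by simp
qed


lemma Dl_Psi_aux:
  fixes a m n :: nat and x t :: rat
  assumes mn: "m \<le> n" and L1: "L1 \<subseteq> L" "x \<in> L1"
    and c1: "(\<pi>1,l1) \<in> C (a+1) m (L1 - {x}) x"
    and c2: "(\<pi>2,l2) \<in> C (a+2*m+2) (n-m) (L - L1) t"
  shows "Dl a n (insert {a+1,a+2*m+2} (\<pi>1 \<union> \<pi>2), \<lambda>B. if B = {a+1,a+2*m+2} then x else l1 B + l2 B)
     = ((m,(L1,x)),((\<pi>1,l1),(\<pi>2,l2)))"
proof -
  let ?B0 = "{a+1,a+2*m+2}"
  let ?\<pi> = "insert ?B0 (\<pi>1 \<union> \<pi>2)"
  let ?l = "\<lambda>B. if B = ?B0 then x else l1 B + l2 B"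
  have nc1: "nc_pair_partition \<pi>1 {a+1+1..a+1+2*m}" and b1: "bij_betw l1 \<pi>1 (L1 - {x})"
    and z1: "\<forall>B. B\<notin>\<pi>1 \<longrightarrow> l1 B = 0"
    using c1 unfolding C_def by auto
  have nc2: "nc_pair_partition \<pi>2 {a+2*m+2+1..a+2*m+2+2*(n-m)}"
    and z2: "\<forall>B. B\<notin>\<pi>2 \<longrightarrow> l2 B = 0"
    using c2 unfolding C_def by auto
  note g = geom[OF nc1 nc2]
  have nc: "nc_pair_partition ?\<pi> {a+1..a+2*(n+1)}"
    by (rule compose_nc[OF mn nc1 nc2])
  have tm: "(THE m. {a+1,a+2*m+2} \<in> ?\<pi>) = m" by (rule the_m[OF nc]) simp
  have lab1: "?l B = l1 B" if "B\<in>\<pi>1" for B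
  proof -
    have "B \<noteq> ?B0" "B \<notin> \<pi>2" using that g(1) g(2) by auto
    then show ?thesis using z2 by simp
  qed
  have lab2: "?l B = l2 B" if "B\<in>\<pi>2" for B
  proof -
    have "B \<noteq> ?B0" "B \<notin> \<pi>1" using that g(1) g(3) by auto
    then show ?thesis using z1 by simp
  qed
  have s1: "\<And>k. k \<in> B \<Longrightarrow> a+2 \<le> k \<and> k \<le> a+2*m+1" if "B\<in>\<pi>1" for B
    using pp_block[OF nc1 that] by auto
  have s2: "\<And>k. k \<in> B \<Longrightarrow> a+2*m+3 \<le> k" if "B\<in>\<pi>2" for B
    using pp_block[OF nc2 that] by auto
  have n1: "\<exists>k. k \<in> B" if "B\<in>\<pi>1" for B
    using pp_block[OF nc1 that] card2_ne by blast
  have n2: "\<exists>k. k \<in> B" if "B\<in>\<pi>2" for B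
    using pp_block[OF nc2 that] card2_ne by blast
  have P1: "{B\<in>?\<pi>. B \<subseteq> {a+1+1..a+1+2*m}} = \<pi>1"
  proof (intro equalityI subsetI)
    fix B assume "B \<in> {B\<in>?\<pi>. B \<subseteq> {a+1+1..a+1+2*m}}"
    then have B: "B \<in> ?\<pi>" "B \<subseteq> {a+1+1..a+1+2*m}" by auto
    have "B \<noteq> ?B0" using B(2) by auto
    moreover have "B \<notin> \<pi>2"
    proof
      assume "B \<in> \<pi>2"
      then obtain k where k: "k \<in> B" using n2 by blast
      then have "a+2*m+3 \<le> k" using s2[OF \<open>B\<in>\<pi>2\<close>] by blast
      moreover have "k \<le> a+1+2*m" using B(2) k by auto
      ultimately show False by simp
    qed
    ultimately show "B \<in> \<pi>1" using B(1) by auto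
  next
    fix B assume "B \<in> \<pi>1"
    then show "B \<in> {B\<in>?\<pi>. B \<subseteq> {a+1+1..a+1+2*m}}" using pp_block[OF nc1] by auto
  qed
  have P2: "{B\<in>?\<pi>. B \<subseteq> {a+2*m+2+1..a+2*m+2+2*(n-m)}} = \<pi>2"
  proof (intro equalityI subsetI)
    fix B assume "B \<in> {B\<in>?\<pi>. B \<subseteq> {a+2*m+2+1..a+2*m+2+2*(n-m)}}"
    then have B: "B \<in> ?\<pi>" "B \<subseteq> {a+2*m+2+1..a+2*m+2+2*(n-m)}" by auto
    have "B \<noteq> ?B0" using B(2) by auto
    moreover have "B \<notin> \<pi>1"
    proof
      assume "B \<in> \<pi>1"
      then obtain k where k: "k \<in> B" using n1 by blast
      then have "k \<le> a+2*m+1" using s1[OF \<open>B\<in>\<pi>1\<close>] by blast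
      moreover have "a+2*m+2+1 \<le> k" using B(2) k by auto
      ultimately show False by simp
    qed
    ultimately show "B \<in> \<pi>2" using B(1) by auto
  next
    fix B assume "B \<in> \<pi>2"
    then show "B \<in> {B\<in>?\<pi>. B \<subseteq> {a+2*m+2+1..a+2*m+2+2*(n-m)}}" using pp_block[OF nc2] by auto
  qed
  have img: "?l ` \<pi>1 = L1 - {x}"
  proof -
    have "?l ` \<pi>1 = l1 ` \<pi>1" using lab1 by (rule image_cong[OF refl])
    then show ?thesis using b1 unfolding bij_betw_def by simp
  qed
  have L1eq: "insert x (?l ` \<pi>1) = L1" using img L1 by auto
  have f1: "(\<lambda>B. if B\<in>\<pi>1 then ?l B else 0) = l1"
  proof
    fix B show "(if B\<in>\<pi>1 then ?l B else 0) = l1 B" using lab1 z1 by simp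
  qed
  have f2: "(\<lambda>B. if B\<in>\<pi>2 then ?l B else 0) = l2"
  proof
    fix B show "(if B\<in>\<pi>2 then ?l B else 0) = l2 B" using lab2 z2 by simp
  qed
  show ?thesis unfolding Dl_def Let_def fst_conv snd_conv tm P1 P2 f1 f2
    using L1eq by simp
qed


lemma Dl_in:
  fixes a n :: nat and t :: rat
  assumes zC: "(\<pi>, lab) \<in> C a (n+1) L t"
  shows "Dl a n (\<pi>, lab) \<in> Dset a n L t \<and> Psi a (Dl a n (\<pi>, lab)) = (\<pi>, lab)"
proof -
  have nc: "nc_pair_partition \<pi> {a+1..a+2*(n+1)}" and b: "bij_betw lab \<pi> L"
    and z: "\<forall>B. B\<notin>\<pi> \<longrightarrow> lab B = 0" and V: "Vtop \<pi> lab t"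
    using zC unfolding C_def by auto
  obtain m where mn: "m \<le> n" and B0: "{a+1,a+2*m+2} \<in> \<pi>"
    and nc1: "nc_pair_partition {B\<in>\<pi>. B \<subseteq> {a+1+1..a+1+2*m}} {a+1+1..a+1+2*m}"
    and nc2: "nc_pair_partition {B\<in>\<pi>. B \<subseteq> {a+2*m+2+1..a+2*m+2+2*(n-m)}} {a+2*m+2+1..a+2*m+2+2*(n-m)}"
    and peq: "\<pi> = insert {a+1,a+2*m+2} ({B\<in>\<pi>. B \<subseteq> {a+1+1..a+1+2*m}} \<union> {B\<in>\<pi>. B \<subseteq> {a+2*m+2+1..a+2*m+2+2*(n-m)}})"
    using decompose_nc[OF nc] by blast
  define B0' where "B0' = {a+1,a+2*m+2}"
  define P1 where "P1 = {B\<in>\<pi>. B \<subseteq> {a+1+1..a+1+2*m}}"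
  define P2 where "P2 = {B\<in>\<pi>. B \<subseteq> {a+2*m+2+1..a+2*m+2+2*(n-m)}}"
  define x where "x = lab B0'"
  define l1 where "l1 = (\<lambda>B. if B\<in>P1 then lab B else 0)"
  define l2 where "l2 = (\<lambda>B. if B\<in>P2 then lab B else 0)"
  define L1 where "L1 = insert x (lab ` P1)"
  have tm: "(THE m. {a+1,a+2*m+2} \<in> \<pi>) = m" by (rule the_m[OF nc B0])
  have Dleq: "Dl a n (\<pi>, lab) = ((m,(L1,x)),((P1,l1),(P2,l2)))"
    unfolding Dl_def Let_def fst_conv snd_conv tm L1_def x_def l1_def l2_def P1_def P2_def B0'_def ..
  note nc1 = nc1[folded P1_def] and nc2 = nc2[folded P2_def]
  note g = geom[OF nc1 nc2]
  have peq': "\<pi> = insert B0' (P1 \<union> P2)" using peq unfolding P1_def P2_def B0'_def .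
  have labeq: "lab = (\<lambda>B. if B = B0' then x else l1 B + l2 B)"
  proof
    fix B show "lab B = (if B = B0' then x else l1 B + l2 B)"
    proof (cases "B = B0'")
      case True then show ?thesis unfolding x_def by simp
    next
      case False
      show ?thesis
      proof (cases "B \<in> P1")
        case True
        then have "B \<notin> P2" using g(1) by blast
        then show ?thesis using True False unfolding l1_def l2_def by simp
      next
        case nP1: False
        show ?thesis
        proof (cases "B \<in> P2")
          case True then show ?thesis using nP1 False unfolding l1_def l2_def by simp
        next
          case nP2: False
          then have "B \<notin> \<pi>" using peq' nP1 False by blast
          then show ?thesis using z nP1 nP2 False unfolding l1_def l2_def by simp
        qed
      qed
    qed
  qed
  have psi: "Psi a (Dl a n (\<pi>, lab)) = (\<pi>, lab)"
    unfolding Dleq Psi_def using peq' labeq unfolding B0'_def by simp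
  have z1: "\<And>B. B \<notin> P1 \<Longrightarrow> l1 B = 0" unfolding l1_def by simp
  have z2: "\<And>B. B \<notin> P2 \<Longrightarrow> l2 B = 0" unfolding l2_def by simp
  have VV: "Vtop P1 l1 x \<and> Vtop P2 l2 t \<and> x \<noteq> t \<and> (\<forall>B\<in>P1. rootp P1 B \<longrightarrow> \<not>(l1 B < x \<and> t < x))"
    using V unfolding labeq
    apply (subst (asm) peq')
    using Vtop_split[OF g(1) g(2) g(3) g(4) g(5) g(6) g(7) g(8), of l1 l2 x t, folded B0'_def] z1 z2
    by blast
  have inj: "inj_on lab \<pi>" using b unfolding bij_betw_def by simp
  have P1s: "P1 \<subseteq> \<pi>" "P2 \<subseteq> \<pi>" "B0' \<in> \<pi>" unfolding P1_def P2_def B0'_def using B0 by auto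
  have xn: "x \<notin> lab ` P1"
  proof
    assume "x \<in> lab ` P1"
    then obtain B where "B \<in> P1" "lab B = lab B0'" unfolding x_def by auto
    then have "B = B0'" using inj P1s unfolding inj_on_def by blast
    then show False using g(2) \<open>B\<in>P1\<close> unfolding B0'_def by simp
  qed
  have L1x: "L1 - {x} = lab ` P1" unfolding L1_def using xn by auto
  have "card {a+1+1..a+1+2*m} = 2 * card P1"
    using card_Union_pairs[OF nc1] nc1 unfolding nc_pair_partition_def pair_partition_def by simp
  then have cP1: "card P1 = m" by simp
  have cL1: "card L1 = m+1"
  proof -
    have "card (lab ` P1) = card P1" using inj P1s by (meson card_image inj_on_subset)
    moreover have "finite (lab ` P1)"
    proof -
      have "P1 \<subseteq> Pow {a+1+1..a+1+2*m}" unfolding P1_def by auto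
      then show ?thesis by (meson finite_Pow_iff finite_atLeastAtMost finite_imageI finite_subset)
    qed
    ultimately show ?thesis unfolding L1_def using xn cP1 by simp
  qed
  have Lim: "lab ` \<pi> = L" using b unfolding bij_betw_def by simp
  have L1L: "L1 \<subseteq> L" unfolding L1_def x_def using Lim P1s by auto
  have xL1: "x \<in> L1" unfolding L1_def by simp
  have finP1: "finite P1"
  proof -
    have "P1 \<subseteq> Pow {a+1+1..a+1+2*m}" unfolding P1_def by auto
    then show ?thesis by (meson finite_Pow_iff finite_atLeastAtMost finite_subset)
  qed
  have cond: "t < x \<longrightarrow> (\<forall>y\<in>L1. x \<le> y)"
  proof
    assume tx: "t < x"
    have R: "\<forall>B\<in>P1. rootp P1 B \<longrightarrow> x < l1 B"
    proof (intro ballI impI)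
      fix B assume B: "B \<in> P1" "rootp P1 B"
      then have "\<not> l1 B < x" using VV tx by blast
      moreover have "l1 B \<noteq> x" using VV B unfolding Vtop_def by blast
      ultimately show "x < l1 B" by simp
    qed
    have "\<forall>B\<in>P1. x < l1 B" using force_above[OF finP1 _ R] VV by blast
    then have "\<forall>B\<in>P1. x < lab B" unfolding l1_def by simp
    then show "\<forall>y\<in>L1. x \<le> y" unfolding L1_def by auto
  qed
  have b1: "bij_betw l1 P1 (L1 - {x})"
  proof -
    have "bij_betw lab P1 (lab ` P1)" using inj P1s by (meson inj_on_imp_bij_betw inj_on_subset)
    moreover have "bij_betw l1 P1 (lab ` P1) = bij_betw lab P1 (lab ` P1)"
      by (rule bij_betw_cong) (simp add: l1_def)
    ultimately show ?thesis using L1x by simp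
  qed
  have LP2: "lab ` P2 = L - L1"
  proof -
    have "L = lab ` (insert B0' (P1 \<union> P2))" using Lim peq' by simp
    then have "L = insert x (lab ` P1) \<union> lab ` P2" unfolding x_def by auto
    moreover have "lab ` P2 \<inter> insert x (lab ` P1) = {}"
    proof (rule ccontr)
      assume "lab ` P2 \<inter> insert x (lab ` P1) \<noteq> {}"
      then obtain B2 B where B2: "B2 \<in> P2" and B: "B \<in> insert B0' P1" and eq: "lab B2 = lab B"
        unfolding x_def by blast
      have "B \<in> \<pi>" using B P1s by blast
      then have "B2 = B" using inj eq B2 P1s unfolding inj_on_def by blast
      then show False using B B2 g(1) g(3) unfolding B0'_def by blast
    qed
    ultimately show ?thesis unfolding L1_def by auto
  qed
  have b2: "bij_betw l2 P2 (L - L1)"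
  proof -
    have "bij_betw lab P2 (lab ` P2)" using inj P1s by (meson inj_on_imp_bij_betw inj_on_subset)
    moreover have "bij_betw l2 P2 (lab ` P2) = bij_betw lab P2 (lab ` P2)"
      by (rule bij_betw_cong) (simp add: l2_def)
    ultimately show ?thesis using LP2 by simp
  qed
  have c1: "(P1, l1) \<in> C (a+1) m (L1 - {x}) x"
    unfolding C_def using nc1 b1 z1 VV by simp
  have c2: "(P2, l2) \<in> C (a+2*m+2) (n-m) (L - L1) t"
    unfolding C_def using nc2 b2 z2 VV by simp
  have "Dl a n (\<pi>, lab) \<in> Dset a n L t"
    unfolding Dleq Dset_def Idx_def using mn L1L cL1 xL1 cond c1 c2 by simp
  then show ?thesis using psi by simp
qed


lemma Dset_mem:
  assumes "((m,L1,x),((\<pi>1,l1),(\<pi>2,l2))) \<in> Dset a n L t"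
  shows "m \<le> n" "L1 \<subseteq> L" "card L1 = m+1" "x \<in> L1" "t < x \<longrightarrow> (\<forall>y\<in>L1. x \<le> y)"
    "(\<pi>1,l1) \<in> C (a+1) m (L1 - {x}) x" "(\<pi>2,l2) \<in> C (a+2*m+2) (n-m) (L - L1) t"
  using assms unfolding Dset_def Idx_def by auto

lemma Psi_bij:
  assumes tL: "t \<notin> L"
  shows "bij_betw (Psi a) (Dset a n L t) (C a (n+1) L t)"
proof (rule bij_betw_byWitness[where f'="Dl a n"])
  show "\<forall>d\<in>Dset a n L t. Dl a n (Psi a d) = d"
  proof
    fix d assume d: "d \<in> Dset a n L t"
    obtain m L1 x \<pi>1 l1 \<pi>2 l2 where deq: "d = ((m,L1,x),((\<pi>1,l1),(\<pi>2,l2)))" by (cases d) auto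
    note M = Dset_mem[OF d[unfolded deq]]
    show "Dl a n (Psi a d) = d" unfolding deq Psi_def
      using Dl_Psi_aux[OF M(1) M(2) M(4) M(6) M(7)] by simp
  qed
  show "\<forall>z\<in>C a (n+1) L t. Psi a (Dl a n z) = z"
  proof
    fix z assume z: "z \<in> C a (n+1) L t"
    obtain \<pi> lab where zeq: "z = (\<pi>, lab)" by (cases z) auto
    show "Psi a (Dl a n z) = z" using Dl_in[OF z[unfolded zeq]] zeq by simp
  qed
  show "Psi a ` Dset a n L t \<subseteq> C a (n+1) L t"
  proof
    fix z assume "z \<in> Psi a ` Dset a n L t"
    then obtain d where d: "d \<in> Dset a n L t" and zd: "z = Psi a d" by blast
    obtain m L1 x \<pi>1 l1 \<pi>2 l2 where deq: "d = ((m,L1,x),((\<pi>1,l1),(\<pi>2,l2)))" by (cases d) auto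
    note M = Dset_mem[OF d[unfolded deq]]
    show "z \<in> C a (n+1) L t" unfolding zd deq Psi_def
      using Psi_in_aux[OF M(1) M(2) M(4) M(5) tL M(6) M(7)] by simp
  qed
  show "Dl a n ` C a (n+1) L t \<subseteq> Dset a n L t"
  proof
    fix d assume "d \<in> Dl a n ` C a (n+1) L t"
    then obtain z where z: "z \<in> C a (n+1) L t" and dz: "d = Dl a n z" by blast
    obtain \<pi> lab where zeq: "z = (\<pi>, lab)" by (cases z) auto
    show "d \<in> Dset a n L t" using Dl_in[OF z[unfolded zeq]] dz zeq by simp
  qed
qed

lemma sum_Sigma': "finite A \<Longrightarrow> \<forall>x\<in>A. finite (B x) \<Longrightarrow> sum h (Sigma A B) = (\<Sum>x\<in>A. \<Sum>y\<in>B x. h (x,y))"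
  by (simp add: sum.Sigma split_def)

lemma card_step:
  assumes tL: "t \<notin> L" and fL: "finite L"
  shows "card (C a (n+1) L t) = (\<Sum>m=0..n. \<Sum>L1\<in>{L1. L1 \<subseteq> L \<and> card L1 = m+1}.
     \<Sum>x\<in>{x\<in>L1. t < x \<longrightarrow> (\<forall>y\<in>L1. x \<le> y)}.
       card (C (a+1) m (L1 - {x}) x) * card (C (a+2*m+2) (n-m) (L - L1) t))"
proof -
  have "card (C a (n+1) L t) = card (Dset a n L t)"
    using bij_betw_same_card[OF Psi_bij[OF tL]] by simp
  also have "\<dots> = (\<Sum>i\<in>Idx n L t. card ((\<lambda>(m,L1,x). C (a+1) m (L1 - {x}) x \<times> C (a+2*m+2) (n-m) (L - L1) t) i))"
    unfolding Dset_def
  proof (rule card_SigmaI)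
    have "Idx n L t \<subseteq> {0..n} \<times> (Pow L \<times> L)" unfolding Idx_def by auto
    then show "finite (Idx n L t)" using fL by (meson finite_SigmaI finite_Pow_iff finite_atLeastAtMost finite_subset)
    show "\<forall>i\<in>Idx n L t. finite ((\<lambda>(m,L1,x). C (a+1) m (L1 - {x}) x \<times> C (a+2*m+2) (n-m) (L - L1) t) i)"
    proof
      fix i assume i: "i \<in> Idx n L t"
      obtain m L1 x where ieq: "i = (m,L1,x)" by (cases i) auto
      have "L1 \<subseteq> L" using i unfolding ieq Idx_def by auto
      then have "finite L1" using fL finite_subset by blast
      then show "finite ((\<lambda>(m,L1,x). C (a+1) m (L1 - {x}) x \<times> C (a+2*m+2) (n-m) (L - L1) t) i)"
        unfolding ieq using finite_C fL by simp
    qed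
  qed
  also have "\<dots> = (\<Sum>m\<in>{0..n}. \<Sum>p\<in>Sigma {L1. L1 \<subseteq> L \<and> card L1 = m+1} (\<lambda>L1. {x\<in>L1. t < x \<longrightarrow> (\<forall>y\<in>L1. x \<le> y)}).
       card ((\<lambda>(m,L1,x). C (a+1) m (L1 - {x}) x \<times> C (a+2*m+2) (n-m) (L - L1) t) (m,p)))"
    unfolding Idx_def
  proof (rule sum_Sigma')
    show "finite {0..n}" by simp
    show "\<forall>m\<in>{0..n}. finite (Sigma {L1. L1 \<subseteq> L \<and> card L1 = m+1} (\<lambda>L1. {x\<in>L1. t < x \<longrightarrow> (\<forall>y\<in>L1. x \<le> y)}))"
    proof
      fix m
      have "Sigma {L1. L1 \<subseteq> L \<and> card L1 = m+1} (\<lambda>L1. {x\<in>L1. t < x \<longrightarrow> (\<forall>y\<in>L1. x \<le> y)}) \<subseteq> Pow L \<times> L"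
        by auto
      then show "finite (Sigma {L1. L1 \<subseteq> L \<and> card L1 = m+1} (\<lambda>L1. {x\<in>L1. t < x \<longrightarrow> (\<forall>y\<in>L1. x \<le> y)}))"
        using fL by (meson finite_SigmaI finite_Pow_iff finite_subset)
    qed
  qed
  also have "\<dots> = (\<Sum>m\<in>{0..n}. \<Sum>L1\<in>{L1. L1 \<subseteq> L \<and> card L1 = m+1}. \<Sum>x\<in>{x\<in>L1. t < x \<longrightarrow> (\<forall>y\<in>L1. x \<le> y)}.
       card ((\<lambda>(m,L1,x). C (a+1) m (L1 - {x}) x \<times> C (a+2*m+2) (n-m) (L - L1) t) (m,(L1,x))))"
  proof (rule sum.cong[OF refl])
    fix m
    show "(\<Sum>p\<in>Sigma {L1. L1 \<subseteq> L \<and> card L1 = m+1} (\<lambda>L1. {x\<in>L1. t < x \<longrightarrow> (\<forall>y\<in>L1. x \<le> y)}).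
       card ((\<lambda>(m,L1,x). C (a+1) m (L1 - {x}) x \<times> C (a+2*m+2) (n-m) (L - L1) t) (m,p))) =
      (\<Sum>L1\<in>{L1. L1 \<subseteq> L \<and> card L1 = m+1}. \<Sum>x\<in>{x\<in>L1. t < x \<longrightarrow> (\<forall>y\<in>L1. x \<le> y)}.
       card ((\<lambda>(m,L1,x). C (a+1) m (L1 - {x}) x \<times> C (a+2*m+2) (n-m) (L - L1) t) (m,(L1,x))))"
    proof (rule sum_Sigma')
      have "{L1. L1 \<subseteq> L \<and> card L1 = m+1} \<subseteq> Pow L" by auto
      then show "finite {L1. L1 \<subseteq> L \<and> card L1 = m+1}" using fL by (meson finite_Pow_iff finite_subset)
      show "\<forall>L1\<in>{L1. L1 \<subseteq> L \<and> card L1 = m+1}. finite {x\<in>L1. t < x \<longrightarrow> (\<forall>y\<in>L1. x \<le> y)}"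
      proof
        fix L1 assume "L1 \<in> {L1. L1 \<subseteq> L \<and> card L1 = m+1}"
        then have "{x\<in>L1. t < x \<longrightarrow> (\<forall>y\<in>L1. x \<le> y)} \<subseteq> L" by auto
        then show "finite {x\<in>L1. t < x \<longrightarrow> (\<forall>y\<in>L1. x \<le> y)}" using fL by (rule finite_subset)
      qed
    qed
  qed
  also have "\<dots> = (\<Sum>m=0..n. \<Sum>L1\<in>{L1. L1 \<subseteq> L \<and> card L1 = m+1}.
     \<Sum>x\<in>{x\<in>L1. t < x \<longrightarrow> (\<forall>y\<in>L1. x \<le> y)}.
       card (C (a+1) m (L1 - {x}) x) * card (C (a+2*m+2) (n-m) (L - L1) t))"
    by (simp add: card_cartesian_product)
  finally show ?thesis .
qed



lemma rank_bij:
  fixes S :: "'a::linorder set"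
  assumes "finite S"
  shows "bij_betw (\<lambda>x. card {y\<in>S. y < x}) S {0..<card S}"
proof -
  let ?r = "\<lambda>x. card {y\<in>S. y < x}"
  have mono: "?r x < ?r x'" if "x \<in> S" "x' \<in> S" "x < x'" for x x'
  proof (rule psubset_card_mono)
    show "finite {y\<in>S. y < x'}" using assms by simp
    show "{y\<in>S. y < x} \<subset> {y\<in>S. y < x'}" using that by auto
  qed
  have inj: "inj_on ?r S"
  proof (rule inj_onI)
    fix x x' assume "x \<in> S" "x' \<in> S" "?r x = ?r x'"
    show "x = x'"
    proof (rule ccontr)
      assume "x \<noteq> x'"
      then have "x < x' \<or> x' < x" by auto
      then show False using mono \<open>x \<in> S\<close> \<open>x' \<in> S\<close> \<open>?r x = ?r x'\<close> by fastforce
    qed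
  qed
  have sub: "?r ` S \<subseteq> {0..<card S}"
  proof
    fix i assume "i \<in> ?r ` S"
    then obtain x where x: "x \<in> S" "i = ?r x" by blast
    have "{y\<in>S. y < x} \<subset> S" using x by auto
    then have "?r x < card S" using assms by (meson psubset_card_mono)
    then show "i \<in> {0..<card S}" using x by simp
  qed
  have "card (?r ` S) = card S" using card_image[OF inj] .
  then have "?r ` S = {0..<card S}" using sub by (intro card_subset_eq) auto
  then show ?thesis using inj unfolding bij_betw_def by simp
qed

lemma inner_sum:
  fixes L1 :: "'a::linorder set" and f :: "nat \<Rightarrow> nat"
  assumes fin: "finite L1" and ne: "L1 \<noteq> {}" and tL: "t \<notin> L1"
  shows "(\<Sum>x\<in>{x\<in>L1. t < x \<longrightarrow> (\<forall>y\<in>L1. x \<le> y)}. f (card {y\<in>L1 - {x}. y < x})) =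
    (if card {y\<in>L1. y < t} = 0 then f 0 else 0) + (\<Sum>r<card {y\<in>L1. y < t}. f r)"
proof -
  let ?A1 = "{x\<in>L1. x < t}"
  let ?A2 = "{x\<in>L1. t < x \<and> (\<forall>y\<in>L1. x \<le> y)}"
  have split: "{x\<in>L1. t < x \<longrightarrow> (\<forall>y\<in>L1. x \<le> y)} = ?A1 \<union> ?A2"
  proof (intro equalityI subsetI)
    fix x assume x: "x \<in> {x\<in>L1. t < x \<longrightarrow> (\<forall>y\<in>L1. x \<le> y)}"
    then have "x \<noteq> t" using tL by auto
    then show "x \<in> ?A1 \<union> ?A2" using x by auto
  qed auto
  have disj: "?A1 \<inter> ?A2 = {}" by auto
  have eq1: "{y\<in>L1 - {x}. y < x} = {y\<in>?A1. y < x}" if "x \<in> ?A1" for x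
    using that by auto
  have s1: "(\<Sum>x\<in>?A1. f (card {y\<in>L1 - {x}. y < x})) = (\<Sum>r<card {y\<in>L1. y < t}. f r)"
  proof -
    have "(\<Sum>x\<in>?A1. f (card {y\<in>L1 - {x}. y < x})) = (\<Sum>x\<in>?A1. f (card {y\<in>?A1. y < x}))"
      using eq1 by (intro sum.cong) auto
    also have "\<dots> = (\<Sum>r\<in>{0..<card ?A1}. f r)"
      using sum.reindex_bij_betw[OF rank_bij[of ?A1], of f] fin by simp
    finally show ?thesis by (simp add: atLeast0LessThan)
  qed
  have s2: "(\<Sum>x\<in>?A2. f (card {y\<in>L1 - {x}. y < x})) = (if card {y\<in>L1. y < t} = 0 then f 0 else 0)"
  proof (cases "card {y\<in>L1. y < t} = 0")
    case True
    then have "{y\<in>L1. y < t} = {}" using fin by simp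
    then have none: "\<forall>y\<in>L1. t < y" using tL by (metis (mono_tags, lifting) empty_Collect_eq linorder_neqE)
    have A2: "?A2 = {Min L1}"
    proof (intro equalityI subsetI)
      fix x assume "x \<in> ?A2"
      then have "x \<in> L1" "\<forall>y\<in>L1. x \<le> y" by auto
      then have "Min L1 = x" using fin by (intro Min_eqI) auto
      then show "x \<in> {Min L1}" by simp
    next
      fix x assume "x \<in> {Min L1}"
      then show "x \<in> ?A2" using fin ne none by auto
    qed
    have E: "{y\<in>L1 - {Min L1}. y < Min L1} = {}"
    proof (rule ccontr)
      assume "{y\<in>L1 - {Min L1}. y < Min L1} \<noteq> {}"
      then obtain y where "y \<in> L1" "y < Min L1" by blast
      moreover have "Min L1 \<le> y" using fin \<open>y \<in> L1\<close> by simp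
      ultimately show False by simp
    qed
    have "(\<Sum>x\<in>?A2. f (card {y\<in>L1 - {x}. y < x})) = f (card {y\<in>L1 - {Min L1}. y < Min L1})"
      unfolding A2 by simp
    also have "\<dots> = f 0" unfolding E by simp
    finally show ?thesis using True by simp
  next
    case False
    then obtain y where y: "y \<in> L1" "y < t" by (metis (mono_tags, lifting) Collect_empty_eq card.empty)
    have A2e: "?A2 = {}"
    proof (rule ccontr)
      assume "?A2 \<noteq> {}"
      then obtain x where "x \<in> L1" "t < x" "\<forall>y\<in>L1. x \<le> y" by blast
      then have "x \<le> y" using y by blast
      then show False using y \<open>t < x\<close> by simp
    qed
    show ?thesis unfolding A2e using False by simp
  qed
  show ?thesis
    unfolding split using s1 s2 disj fin by (simp add: sum.union_disjoint add.commute)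
qed


lemma count_subsets:
  fixes L A :: "'a set"
  assumes fL: "finite L" and AL: "A \<subseteq> L" and ls: "l \<le> s"
  shows "card {L1. L1 \<subseteq> L \<and> card L1 = s \<and> card (L1 \<inter> A) = l} = (card A choose l) * (card (L - A) choose (s - l))"
proof -
  let ?W = "{L1. L1 \<subseteq> L \<and> card L1 = s \<and> card (L1 \<inter> A) = l}"
  let ?U = "{U. U \<subseteq> A \<and> card U = l}"
  let ?V = "{V. V \<subseteq> L - A \<and> card V = s - l}"
  have fA: "finite A" using fL AL finite_subset by blast
  have "bij_betw (\<lambda>L1. (L1 \<inter> A, L1 - A)) ?W (?U \<times> ?V)"
  proof (rule bij_betw_byWitness[where f'="\<lambda>(U,V). U \<union> V"])
    show "\<forall>L1\<in>?W. (\<lambda>(U,V). U \<union> V) (L1 \<inter> A, L1 - A) = L1" by auto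
    show "\<forall>p\<in>?U \<times> ?V. (\<lambda>L1. (L1 \<inter> A, L1 - A)) ((\<lambda>(U,V). U \<union> V) p) = p" by auto
    show "(\<lambda>L1. (L1 \<inter> A, L1 - A)) ` ?W \<subseteq> ?U \<times> ?V"
    proof
      fix p assume "p \<in> (\<lambda>L1. (L1 \<inter> A, L1 - A)) ` ?W"
      then obtain L1 where L1: "L1 \<subseteq> L" "card L1 = s" "card (L1 \<inter> A) = l" and p: "p = (L1 \<inter> A, L1 - A)" by blast
      have "finite L1" using L1 fL finite_subset by blast
      then have "card (L1 - A) = card L1 - card (L1 \<inter> A)" by (simp add: card_Diff_subset_Int)
      then show "p \<in> ?U \<times> ?V" using L1 p by auto
    qed
    show "(\<lambda>(U,V). U \<union> V) ` (?U \<times> ?V) \<subseteq> ?W"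
    proof
      fix L1 assume "L1 \<in> (\<lambda>(U,V). U \<union> V) ` (?U \<times> ?V)"
      then obtain U V where U: "U \<subseteq> A" "card U = l" and V: "V \<subseteq> L - A" "card V = s - l" and L1: "L1 = U \<union> V" by blast
      have fU: "finite U" using U fA finite_subset by blast
      have fV: "finite V" using V fL finite_subset by blast
      have "U \<inter> V = {}" using U V by blast
      then have "card L1 = l + (s - l)" using L1 U V fU fV by (simp add: card_Un_disjoint)
      moreover have "L1 \<inter> A = U" using L1 U V by blast
      ultimately show "L1 \<in> ?W" using L1 U V AL ls by auto
    qed
  qed
  then have "card ?W = card (?U \<times> ?V)" by (rule bij_betw_same_card)
  also have "\<dots> = (card A choose l) * (card (L - A) choose (s - l))"
    by (simp add: card_cartesian_product n_subsets fA fL)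
  finally show ?thesis .
qed

lemma group_subsets:
  fixes L A :: "'a set" and G :: "nat \<Rightarrow> nat"
  assumes fL: "finite L" and AL: "A \<subseteq> L"
  shows "(\<Sum>L1\<in>{L1. L1 \<subseteq> L \<and> card L1 = s}. G (card (L1 \<inter> A))) =
     (\<Sum>l=0..s. (card A choose l) * (card (L - A) choose (s - l)) * G l)"
proof -
  let ?U = "{L1. L1 \<subseteq> L \<and> card L1 = s}"
  have "?U \<subseteq> Pow L" by auto
  then have fU: "finite ?U" using fL by (meson finite_Pow_iff finite_subset)
  have img: "(\<lambda>L1. card (L1 \<inter> A)) ` ?U \<subseteq> {0..s}"
  proof
    fix l assume "l \<in> (\<lambda>L1. card (L1 \<inter> A)) ` ?U"
    then obtain L1 where L1: "L1 \<subseteq> L" "card L1 = s" "l = card (L1 \<inter> A)" by blast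
    have "finite L1" using L1 fL finite_subset by blast
    then have "card (L1 \<inter> A) \<le> card L1" by (intro card_mono) auto
    then show "l \<in> {0..s}" using L1 by simp
  qed
  have "(\<Sum>L1\<in>?U. G (card (L1 \<inter> A))) = (\<Sum>l\<in>{0..s}. \<Sum>L1\<in>{L1\<in>?U. card (L1 \<inter> A) = l}. G (card (L1 \<inter> A)))"
    using sum.group[OF fU _ img, of "\<lambda>L1. G (card (L1 \<inter> A))"] by simp
  also have "\<dots> = (\<Sum>l\<in>{0..s}. card {L1\<in>?U. card (L1 \<inter> A) = l} * G l)"
  proof (rule sum.cong[OF refl])
    fix l assume "l \<in> {0..s}"
    have "(\<Sum>L1\<in>{L1\<in>?U. card (L1 \<inter> A) = l}. G (card (L1 \<inter> A))) = (\<Sum>L1\<in>{L1\<in>?U. card (L1 \<inter> A) = l}. G l)"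
      by (rule sum.cong) auto
    then show "(\<Sum>L1\<in>{L1\<in>?U. card (L1 \<inter> A) = l}. G (card (L1 \<inter> A))) = card {L1\<in>?U. card (L1 \<inter> A) = l} * G l"
      by simp
  qed
  also have "\<dots> = (\<Sum>l=0..s. (card A choose l) * (card (L - A) choose (s - l)) * G l)"
  proof (rule sum.cong[OF refl])
    fix l assume "l \<in> {0..s}"
    then have "card {L1\<in>?U. card (L1 \<inter> A) = l} = (card A choose l) * (card (L - A) choose (s - l))"
      using count_subsets[OF fL AL, of l s] by (simp add: conj_assoc)
    then show "card {L1\<in>?U. card (L1 \<inter> A) = l} * G l = (card A choose l) * (card (L - A) choose (s - l)) * G l"
      by simp
  qed
  finally show ?thesis .
qed


lemma comb:
  fixes L :: "'a::linorder set" and NN :: "nat \<Rightarrow> nat \<Rightarrow> nat"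
  assumes fL: "finite L" and cL: "card L = n+1" and tL: "t \<notin> L"
    and kj: "k = card {y\<in>L. y < t} + 1"
  shows "(\<Sum>m=0..n. \<Sum>L1\<in>{L1. L1 \<subseteq> L \<and> card L1 = m+1}. \<Sum>x\<in>{x\<in>L1. t < x \<longrightarrow> (\<forall>y\<in>L1. x \<le> y)}.
     NN m (card {y\<in>L1-{x}. y < x} + 1) * NN (n-m) (card {y\<in>L-L1. y < t} + 1))
   = (\<Sum>m = 0..n. \<Sum>l = max 0 (m + k - (n + 1)) .. min (k - 1) (m + 1).
                (k - 1 choose l) * ((n + 2 - k) choose (m + 1 - l)) *
                ((if l = 0 then NN m 1 else 0) + (\<Sum>r = 1..l. NN m r)) *
                NN (n - m) (k - l))"
proof (rule sum.cong[OF refl])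
  fix m assume "m \<in> {0..n}"
  define A where "A = {y\<in>L. y < t}"
  define j where "j = card A"
  have AL: "A \<subseteq> L" unfolding A_def by auto
  have fA: "finite A" using AL fL finite_subset by blast
  have jle: "j \<le> n+1" unfolding j_def using card_mono[OF fL AL] cL by simp
  have kj': "k = j + 1" unfolding j_def A_def using kj by simp
  have cLA: "card (L - A) = n + 1 - j" unfolding j_def using card_Diff_subset[OF fA AL] cL by simp
  define G where "G l = ((if l = 0 then NN m 1 else 0) + (\<Sum>r<l. NN m (r+1))) * NN (n-m) (j - l + 1)" for l
  have step1: "(\<Sum>x\<in>{x\<in>L1. t < x \<longrightarrow> (\<forall>y\<in>L1. x \<le> y)}.
       NN m (card {y\<in>L1-{x}. y < x} + 1) * NN (n-m) (card {y\<in>L-L1. y < t} + 1)) = G (card (L1 \<inter> A))"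
    if L1: "L1 \<in> {L1. L1 \<subseteq> L \<and> card L1 = m+1}" for L1
  proof -
    have L1L: "L1 \<subseteq> L" and cL1: "card L1 = m+1" using L1 by auto
    have fL1: "finite L1" using L1L fL finite_subset by blast
    have ne: "L1 \<noteq> {}" using cL1 by auto
    have tL1: "t \<notin> L1" using tL L1L by auto
    have e1: "{y\<in>L1. y < t} = L1 \<inter> A" unfolding A_def using L1L by auto
    have e2: "{y\<in>L-L1. y < t} = A - (L1 \<inter> A)" unfolding A_def by auto
    have c2: "card {y\<in>L-L1. y < t} = j - card (L1 \<inter> A)"
      unfolding e2 j_def by (rule card_Diff_subset) (use fA in auto)
    have "(\<Sum>x\<in>{x\<in>L1. t < x \<longrightarrow> (\<forall>y\<in>L1. x \<le> y)}.
       NN m (card {y\<in>L1-{x}. y < x} + 1) * NN (n-m) (card {y\<in>L-L1. y < t} + 1)) =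
       (\<Sum>x\<in>{x\<in>L1. t < x \<longrightarrow> (\<forall>y\<in>L1. x \<le> y)}. NN m (card {y\<in>L1-{x}. y < x} + 1)) * NN (n-m) (card {y\<in>L-L1. y < t} + 1)"
      by (simp add: sum_distrib_right)
    also have "(\<Sum>x\<in>{x\<in>L1. t < x \<longrightarrow> (\<forall>y\<in>L1. x \<le> y)}. NN m (card {y\<in>L1-{x}. y < x} + 1)) =
       (if card {y\<in>L1. y < t} = 0 then NN m (0+1) else 0) + (\<Sum>r<card {y\<in>L1. y < t}. NN m (r+1))"
      by (rule inner_sum[OF fL1 ne tL1, of "\<lambda>r. NN m (r+1)"])
    finally show ?thesis unfolding G_def c2 e1 by simp
  qed
  have "(\<Sum>L1\<in>{L1. L1 \<subseteq> L \<and> card L1 = m+1}. \<Sum>x\<in>{x\<in>L1. t < x \<longrightarrow> (\<forall>y\<in>L1. x \<le> y)}.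
     NN m (card {y\<in>L1-{x}. y < x} + 1) * NN (n-m) (card {y\<in>L-L1. y < t} + 1))
     = (\<Sum>L1\<in>{L1. L1 \<subseteq> L \<and> card L1 = m+1}. G (card (L1 \<inter> A)))"
    using step1 by (rule sum.cong[OF refl])
  also have "\<dots> = (\<Sum>l=0..m+1. (j choose l) * ((n + 1 - j) choose (m+1 - l)) * G l)"
    using group_subsets[OF fL AL, where s="m+1" and G=G] unfolding j_def[symmetric] cLA .
  also have "\<dots> = (\<Sum>l = max 0 (m + k - (n + 1)) .. min (k - 1) (m + 1).
                (k - 1 choose l) * ((n + 2 - k) choose (m + 1 - l)) *
                ((if l = 0 then NN m 1 else 0) + (\<Sum>r = 1..l. NN m r)) *
                NN (n - m) (k - l))"
  proof (rule sum.mono_neutral_cong_right)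
    show "finite {0..m+1}" by simp
    show "{max 0 (m + k - (n + 1)) .. min (k - 1) (m + 1)} \<subseteq> {0..m+1}" by auto
    show "\<forall>l\<in>{0..m+1} - {max 0 (m + k - (n + 1)) .. min (k - 1) (m + 1)}.
        (j choose l) * ((n + 1 - j) choose (m+1 - l)) * G l = 0"
    proof
      fix l assume l: "l \<in> {0..m+1} - {max 0 (m + k - (n + 1)) .. min (k - 1) (m + 1)}"
      then have "l \<le> m+1" "l < m + k - (n+1) \<or> l > k - 1" by auto
      then have "j < l \<or> n + 1 - j < m + 1 - l" using kj' jle by auto
      then show "(j choose l) * ((n + 1 - j) choose (m+1 - l)) * G l = 0" by auto
    qed
    fix l assume l: "l \<in> {max 0 (m + k - (n + 1)) .. min (k - 1) (m + 1)}"
    then have lj: "l \<le> j" using kj' by auto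
    have "(\<Sum>r<l. NN m (r+1)) = (\<Sum>r = 1..l. NN m r)"
      using sum.atLeast1_atMost_eq[of "NN m" l] by simp
    moreover have "k - 1 = j" "n + 2 - k = n + 1 - j" "k - l = j - l + 1" using kj' lj by auto
    ultimately show "(j choose l) * ((n + 1 - j) choose (m+1 - l)) * G l =
      (k - 1 choose l) * ((n + 2 - k) choose (m + 1 - l)) *
                ((if l = 0 then NN m 1 else 0) + (\<Sum>r = 1..l. NN m r)) *
                NN (n - m) (k - l)"
      unfolding G_def by (simp add: mult.assoc)
  qed
  finally show "(\<Sum>L1\<in>{L1. L1 \<subseteq> L \<and> card L1 = m+1}. \<Sum>x\<in>{x\<in>L1. t < x \<longrightarrow> (\<forall>y\<in>L1. x \<le> y)}.
     NN m (card {y\<in>L1-{x}. y < x} + 1) * NN (n-m) (card {y\<in>L-L1. y < t} + 1)) =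
     (\<Sum>l = max 0 (m + k - (n + 1)) .. min (k - 1) (m + 1).
                (k - 1 choose l) * ((n + 2 - k) choose (m + 1 - l)) *
                ((if l = 0 then NN m 1 else 0) + (\<Sum>r = 1..l. NN m r)) *
                NN (n - m) (k - l))" .
qed



lemma C_base: "card (C a 0 {} t) = 1"
proof -
  have "C a 0 {} t = {({}, \<lambda>_. 0)}"
  proof (intro equalityI subsetI)
    fix z assume z: "z \<in> C a 0 {} t"
    obtain \<pi> lab where zeq: "z = (\<pi>, lab)" by (cases z) auto
    have nc: "nc_pair_partition \<pi> {a+1..a+2*0}" and zz: "\<forall>B. B\<notin>\<pi> \<longrightarrow> lab B = 0"
      using z unfolding zeq C_def by auto
    have "\<pi> = {}"
    proof (rule ccontr)
      assume "\<pi> \<noteq> {}"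
      then obtain B where B: "B \<in> \<pi>" by blast
      then have "B \<subseteq> {a+1..a+2*0}" "card B = 2" using pp_block[OF nc B] by auto
      then show False by simp
    qed
    moreover then have "lab = (\<lambda>_. 0)" using zz by auto
    ultimately show "z \<in> {({}, \<lambda>_. 0)}" using zeq by simp
  next
    fix z assume "z \<in> {({}::nat set set, \<lambda>_::nat set. 0::rat)}"
    then have zeq: "z = ({}, \<lambda>_. 0)" by simp
    have "nc_pair_partition {} {a+1..a+2*0}"
      unfolding nc_pair_partition_def pair_partition_def noncrossing_def by simp
    moreover have "Vtop ({}::nat set set) (\<lambda>_. 0::rat) t" unfolding Vtop_def Vloc_def by simp
    moreover have "bij_betw (\<lambda>_::nat set. 0::rat) {} {}" by (simp add: bij_betw_def)
    ultimately show "z \<in> C a 0 {} t" unfolding zeq C_def by simp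
  qed
  then show ?thesis by simp
qed

lemma chain:
  fixes L :: "rat set"
  assumes fL: "finite L" and cL: "card L = n+1" and tL: "t \<notin> L"
    and IH: "\<And>m a L t. m \<le> n \<Longrightarrow> finite L \<Longrightarrow> card L = m \<Longrightarrow> t \<notin> L \<Longrightarrow>
              card (C a m L t) = N m (card {y\<in>L. y < t} + 1)"
    and kj: "k = card {y\<in>L. y < t} + 1"
  shows "card (C a (n+1) L t) = (\<Sum>m = 0..n. \<Sum>l = max 0 (m + k - (n + 1)) .. min (k - 1) (m + 1).
                (k - 1 choose l) * ((n + 2 - k) choose (m + 1 - l)) *
                ((if l = 0 then N m 1 else 0) + (\<Sum>r = 1..l. N m r)) *
                N (n - m) (k - l))"
proof -
  have "card (C a (n+1) L t) = (\<Sum>m=0..n. \<Sum>L1\<in>{L1. L1 \<subseteq> L \<and> card L1 = m+1}.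
     \<Sum>x\<in>{x\<in>L1. t < x \<longrightarrow> (\<forall>y\<in>L1. x \<le> y)}.
       card (C (a+1) m (L1 - {x}) x) * card (C (a+2*m+2) (n-m) (L - L1) t))"
    by (rule card_step[OF tL fL])
  also have "\<dots> = (\<Sum>m=0..n. \<Sum>L1\<in>{L1. L1 \<subseteq> L \<and> card L1 = m+1}. \<Sum>x\<in>{x\<in>L1. t < x \<longrightarrow> (\<forall>y\<in>L1. x \<le> y)}.
     N m (card {y\<in>L1-{x}. y < x} + 1) * N (n-m) (card {y\<in>L-L1. y < t} + 1))"
  proof (intro sum.cong refl)
    fix m L1 x assume m: "m \<in> {0..n}" and L1: "L1 \<in> {L1. L1 \<subseteq> L \<and> card L1 = m+1}"
      and x: "x \<in> {x\<in>L1. t < x \<longrightarrow> (\<forall>y\<in>L1. x \<le> y)}"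
    have L1L: "L1 \<subseteq> L" and cL1: "card L1 = m+1" and xL1: "x \<in> L1" using L1 x by auto
    have fL1: "finite L1" using L1L fL finite_subset by blast
    have c1: "card (C (a+1) m (L1 - {x}) x) = N m (card {y\<in>L1-{x}. y < x} + 1)"
      using IH[of m "L1 - {x}" x "a+1"] m fL1 cL1 xL1 by simp
    have "card (L - L1) = n - m" using card_Diff_subset[OF fL1 L1L] cL cL1 by simp
    then have c2: "card (C (a+2*m+2) (n-m) (L - L1) t) = N (n-m) (card {y\<in>L-L1. y < t} + 1)"
      using IH[of "n-m" "L - L1" t "a+2*m+2"] fL tL by simp
    show "card (C (a+1) m (L1 - {x}) x) * card (C (a+2*m+2) (n-m) (L - L1) t) =
      N m (card {y\<in>L1-{x}. y < x} + 1) * N (n-m) (card {y\<in>L-L1. y < t} + 1)"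
      using c1 c2 by simp
  qed
  also have "\<dots> = (\<Sum>m = 0..n. \<Sum>l = max 0 (m + k - (n + 1)) .. min (k - 1) (m + 1).
                (k - 1 choose l) * ((n + 2 - k) choose (m + 1 - l)) *
                ((if l = 0 then N m 1 else 0) + (\<Sum>r = 1..l. N m r)) *
                N (n - m) (k - l))"
    by (rule comb[OF fL cL tL kj])
  finally show ?thesis .
qed

lemma Lnat_facts:
  fixes n k :: nat
  assumes "1 \<le> k" "k \<le> n + 1"
  shows "finite ((of_nat :: nat \<Rightarrow> rat) ` {1..n})" "card ((of_nat :: nat \<Rightarrow> rat) ` {1..n}) = n"
    "(of_nat k - 1/2 :: rat) \<notin> of_nat ` {1..n}"
    "card {y \<in> (of_nat :: nat \<Rightarrow> rat) ` {1..n}. y < of_nat k - 1/2} = k - 1"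
proof -
  show "finite ((of_nat :: nat \<Rightarrow> rat) ` {1..n})" by simp
  show "card ((of_nat :: nat \<Rightarrow> rat) ` {1..n}) = n" by (simp add: card_image inj_on_def)
  show "(of_nat k - 1/2 :: rat) \<notin> of_nat ` {1..n}"
  proof
    assume "(of_nat k - 1/2 :: rat) \<in> of_nat ` {1..n}"
    then obtain i where "(of_nat i :: rat) = of_nat k - 1/2" by auto
    then have "(of_nat (2*i+1) :: rat) = of_nat (2*k)" by (simp add: field_simps)
    then have "2*i+1 = 2*k" by (simp only: of_nat_eq_iff)
    then show False by presburger
  qed
  have "{y \<in> (of_nat :: nat \<Rightarrow> rat) ` {1..n}. y < of_nat k - 1/2} = of_nat ` {1..k-1}"
  proof (intro equalityI subsetI)
    fix y assume "y \<in> {y \<in> (of_nat :: nat \<Rightarrow> rat) ` {1..n}. y < of_nat k - 1/2}"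
    then obtain i where i: "i \<in> {1..n}" "y = of_nat i" "(of_nat i :: rat) < of_nat k - 1/2" by auto
    then have "(of_nat i :: rat) < of_nat k" by simp
    then have "i < k" by (simp only: of_nat_less_iff)
    then show "y \<in> of_nat ` {1..k-1}" using i by auto
  next
    fix y assume "y \<in> (of_nat :: nat \<Rightarrow> rat) ` {1..k-1}"
    then obtain i where i: "i \<in> {1..k-1}" "y = of_nat i" by auto
    then have "i + 1 \<le> k" by auto
    then have "(of_nat i + 1 :: rat) \<le> of_nat k" by (metis of_nat_1 of_nat_add of_nat_le_iff)
    then have "(of_nat i :: rat) < of_nat k - 1/2" by simp
    then show "y \<in> {y \<in> (of_nat :: nat \<Rightarrow> rat) ` {1..n}. y < of_nat k - 1/2}" using i assms by auto
  qed
  then show "card {y \<in> (of_nat :: nat \<Rightarrow> rat) ` {1..n}. y < of_nat k - 1/2} = k - 1"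
    by (simp add: card_image inj_on_def)
qed

lemma C_N:
  "finite L \<Longrightarrow> card L = n \<Longrightarrow> t \<notin> L \<Longrightarrow> card (C a n L t) = N n (card {y\<in>L. y < t} + 1)"
proof (induction n arbitrary: a L t rule: less_induct)
  case (less n)
  show ?case
  proof (cases n)
    case 0
    then have "L = {}" using less.prems by simp
    moreover have "N 0 1 = 1" using N_C[of 0 1] C_base by simp
    ultimately show ?thesis using 0 C_base by simp
  next
    case (Suc n')
    have IH: "\<And>m a L t. m \<le> n' \<Longrightarrow> finite L \<Longrightarrow> card L = m \<Longrightarrow> t \<notin> L \<Longrightarrow>
              card (C a m L t) = N m (card {y\<in>L. y < t} + 1)"
      using less.IH Suc by simp
    define k where "k = card {y\<in>L. y < t} + 1"
    have kle: "1 \<le> k" "k \<le> n' + 2"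
    proof -
      show "1 \<le> k" unfolding k_def by simp
      have "card {y\<in>L. y < t} \<le> card L" using less.prems(1) by (intro card_mono) auto
      then show "k \<le> n' + 2" unfolding k_def using less.prems(2) Suc by simp
    qed
    have kle2: "k \<le> n' + 1 + 1" using kle by simp
    note LF = Lnat_facts[OF kle(1) kle2]
    have "card (C a (n'+1) L t) = (\<Sum>m = 0..n'. \<Sum>l = max 0 (m + k - (n' + 1)) .. min (k - 1) (m + 1).
                (k - 1 choose l) * ((n' + 2 - k) choose (m + 1 - l)) *
                ((if l = 0 then N m 1 else 0) + (\<Sum>r = 1..l. N m r)) *
                N (n' - m) (k - l))"
    proof (rule chain[OF less.prems(1) _ less.prems(3) IH k_def])
      show "card L = n' + 1" using less.prems(2) Suc by simp
    qed
    also have "\<dots> = card (C 0 (n'+1) (of_nat ` {1..n'+1}) (of_nat k - 1/2))"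
    proof (rule chain[OF LF(1) LF(2) LF(3) IH, symmetric])
      show "k = card {y \<in> (of_nat :: nat \<Rightarrow> rat) ` {1..n'+1}. y < of_nat k - 1/2} + 1" using LF(4) kle by simp
    qed
    also have "\<dots> = N (n'+1) k" using N_C by simp
    finally show ?thesis using Suc k_def by simp
  qed
qed

theorem mainTheorem2:
  shows "(\<forall>n k. 1 \<le> k \<and> k \<le> n + 2 \<longrightarrow>
           N (n+1) k =
             (\<Sum>m = 0..n. \<Sum>l = max 0 (m + k - (n + 1)) .. min (k - 1) (m + 1).
                (k - 1 choose l) * ((n + 2 - k) choose (m + 1 - l)) *
                ((if l = 0 then N m 1 else 0) + (\<Sum>r = 1..l. N m r)) *
                N (n - m) (k - l)))
         \<and> (\<forall>n. N n (n + 1) = card (OV2 n))"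
proof (intro conjI allI impI)
  fix n k :: nat assume kk: "1 \<le> k \<and> k \<le> n + 2"
  have kk1: "1 \<le> k" and kk2: "k \<le> n + 1 + 1" using kk by auto
  note LF = Lnat_facts[OF kk1 kk2]
  have IH: "\<And>m a L t. m \<le> n \<Longrightarrow> finite L \<Longrightarrow> card L = m \<Longrightarrow> t \<notin> L \<Longrightarrow>
              card (C a m L t) = N m (card {y\<in>L. y < t} + 1)"
    using C_N by blast
  have "N (n+1) k = card (C 0 (n+1) (of_nat ` {1..n+1}) (of_nat k - 1/2))" using N_C by simp
  also have "\<dots> = (\<Sum>m = 0..n. \<Sum>l = max 0 (m + k - (n + 1)) .. min (k - 1) (m + 1).
                (k - 1 choose l) * ((n + 2 - k) choose (m + 1 - l)) *
                ((if l = 0 then N m 1 else 0) + (\<Sum>r = 1..l. N m r)) *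
                N (n - m) (k - l))"
  proof (rule chain[OF LF(1) LF(2) LF(3) IH])
    show "k = card {y \<in> (of_nat :: nat \<Rightarrow> rat) ` {1..n+1}. y < of_nat k - 1/2} + 1" using LF(4) kk by simp
  qed
  finally show "N (n+1) k = (\<Sum>m = 0..n. \<Sum>l = max 0 (m + k - (n + 1)) .. min (k - 1) (m + 1).
                (k - 1 choose l) * ((n + 2 - k) choose (m + 1 - l)) *
                ((if l = 0 then N m 1 else 0) + (\<Sum>r = 1..l. N m r)) *
                N (n - m) (k - l))" .
next
  fix n show "N n (n + 1) = card (OV2 n)" by (rule part2)
qed


end
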